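(* Let $(H,\sigma)$, $X$, $A$, $H_{X,A}$, $D=D(H_{X,A}^{\rm cop},X)$ and the Hopf projection $\pi:D\to H_{X,A}^{\rm cop}$, $\pi(l_xr_a\otimes y)=l_xr_al_{S^{-1}(y)}$, be as in the context, and let $B=\{d\in D\mid d_1\otimes\pi(d_2)=d\otimes 1\}$. Then: (i) $B=\{l_{S^{-2}(x_2)}\otimes x_1\mid x\in X\}$, and $\theta:X\to B$, $\theta(x)=l_{S^{-2}(x_2)}\otimes x_1$, is a linear isomorphism; (ii) transporting via $\theta$ the left $H_{X,A}^{\rm cop}$-action $\varphi\triangleright d=i(\varphi_{(1)})\,d\,i(S_{H^{\rm cop}_{X,A}}(\varphi_{(2)}))$ and coaction $d\mapsto\pi(d_1)\otimes d_2$ of $B$, $X$ becomes a left Yetter–Drinfeld module over $H_{X,A}^{\rm cop}$ with $$l_xr_a\triangleright y=\langle l_xr_a,S^{-1}(y_1)S^{-2}(y_3)\rangle\,y_2,\qquad \lambda(y)=l_{S^{-1}(y_1)S^{-2}(y_3)}\otimes y_2 .$$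
   Context: Sweedler notation. $(H,\sigma)$ is a CQT Hopf algebra: $\sigma:H\otimes H\to k$ convolution invertible with $\sigma(hh',g)=\sigma(h,g_1)\sigma(h',g_2)$, $\sigma(g,hh')=\sigma(g_2,h)\sigma(g_1,h')$, $\sigma(1,h)=\sigma(h,1)=\varepsilon(h)$, $\sigma(h_1,h'_1)h_2h'_2=h'_1h_1\sigma(h_2,h'_2)$; antipode $S$ bijective. $X,A\subseteq H$ sub-Hopf algebras; in $H^0$, $l_x=\sigma(-,x)$, $r_a=\sigma(a,-)$, $H_{X,A}=\{\sum l_xr_a\}$ is the sub-Hopf algebra $H_{l_X}H_{r_A}$ of $H^0$ ($l_{xy}=l_yl_x$, $\Delta(l_x)=l_{x_1}\otimes l_{x_2}$, $S(l_x)=l_{S^{-1}(x)}$, $r_{ab}=r_ar_b$, $\Delta(r_a)=r_{a_2}\otimes r_{a_1}$, $S(r_a)=r_{S^{-1}(a)}$). $\langle\varphi,y\rangle=\varphi(y)$ is the evaluation pairing $H_{X,A}\otimes X\to k$. $D=D(H_{X,A}^{\rm cop},X)$ is the Hopf algebra on $H_{X,A}\otimes X$ with unit $\varepsilon\otimes1$, multiplication $(m\otimes x)(n\otimes y)=\langle n_3,x_1\rangle\langle S^{-1}(n_1),x_3\rangle mn_2\otimes x_2y$, comultiplication $\Delta(m\otimes x)=(m_2\otimes x_1)\otimes(m_1\otimes x_2)$ (subscripts in $H^0$, $X$); $i(\varphi)=\varphi\otimes1$. In $\varphi_{(1)}\otimes\varphi_{(2)}$ the comultiplication of $H_{X,A}^{\rm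 cop}$ is meant, and $S_{H^{\rm cop}_{X,A}}$ is the inverse of the antipode of $H^0$. *)

theory Defs
  imports Main "HOL.Vector_Spaces"
begin

text \<open>
The ground field is a type 'k of class field; the
Hopf algebra H is a type 'h of class ring_1 (its ring structure is the algebra
multiplication and unit) together with a scalar multiplication sc.
Tensors are finite formal sums of pure tensors, given as lists; two such lists
represent the same element of the tensor product iff all products of linear
functionals agree on them (the tensor product of vector spaces is separated by
such functionals).  Elements of the
finite dual H^0 are functions 'h => 'k; a tensor with factors in H^0 is
identified with its image under the canonical (injective) evaluation map,
i.e. the H^0-factors are evaluated at points of H.
\<close>

definition lin_fun :: "('k::field \<Rightarrow> 'h::ab_group_add \<Rightarrow> 'h) \<Rightarrow> ('h \<Rightarrow> 'k) \<Rightarrow> bool" where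
  "lin_fun sc f \<longleftrightarrow> (\<forall>a b. f (a + b) = f a + f b) \<and> (\<forall>c a. f (sc c a) = c * f a)"

definition teq2 :: "('k::field \<Rightarrow> 'h::ab_group_add \<Rightarrow> 'h) \<Rightarrow> ('h \<times> 'h) list \<Rightarrow> ('h \<times> 'h) list \<Rightarrow> bool" where
  "teq2 sc L M \<longleftrightarrow> (\<forall>f g. lin_fun sc f \<and> lin_fun sc g \<longrightarrow>
      (\<Sum>(a,b)\<leftarrow>L. f a * g b) = (\<Sum>(a,b)\<leftarrow>M. f a * g b))"

definition teq3 :: "('k::field \<Rightarrow> 'h::ab_group_add \<Rightarrow> 'h) \<Rightarrow> ('h \<times> 'h \<times> 'h) list \<Rightarrow> ('h \<times> 'h \<times> 'h) list \<Rightarrow> bool" where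
  "teq3 sc L M \<longleftrightarrow> (\<forall>f g k. lin_fun sc f \<and> lin_fun sc g \<and> lin_fun sc k \<longrightarrow>
      (\<Sum>(a,b,c)\<leftarrow>L. f a * g b * k c) = (\<Sum>(a,b,c)\<leftarrow>M. f a * g b * k c))"

text \<open>(\<Delta> \<otimes> id)\<Delta> and (id \<otimes> \<Delta>)\<Delta>; the former is used as h_1 \<otimes> h_2 \<otimes> h_3.\<close>
definition delta2 :: "('h \<Rightarrow> ('h \<times> 'h) list) \<Rightarrow> 'h \<Rightarrow> ('h \<times> 'h \<times> 'h) list" where
  "delta2 \<Delta> h = concat (map (\<lambda>(u,c). map (\<lambda>(a,b). (a,b,c)) (\<Delta> u)) (\<Delta> h))"

definition delta2' :: "('h \<Rightarrow> ('h \<times> 'h) list) \<Rightarrow> 'h \<Rightarrow> ('h \<times> 'h \<times> 'h) list" where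
  "delta2' \<Delta> h = concat (map (\<lambda>(a,u). map (\<lambda>(b,c). (a,b,c)) (\<Delta> u)) (\<Delta> h))"

definition hopf_algebra :: "('k::field \<Rightarrow> 'h::ring_1 \<Rightarrow> 'h) \<Rightarrow> ('h \<Rightarrow> ('h \<times> 'h) list) \<Rightarrow> ('h \<Rightarrow> 'k) \<Rightarrow> ('h \<Rightarrow> 'h) \<Rightarrow> bool" where
  "hopf_algebra sc \<Delta> \<epsilon> S \<longleftrightarrow>
     vector_space sc
   \<and> (\<forall>c a b. sc c (a * b) = sc c a * b \<and> sc c (a * b) = a * sc c b)
   \<and> (\<forall>a b. teq2 sc (\<Delta> (a + b)) (\<Delta> a @ \<Delta> b))
   \<and> (\<forall>c a. teq2 sc (\<Delta> (sc c a)) (map (\<lambda>(x,y). (sc c x, y)) (\<Delta> a)))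
   \<and> (\<forall>h. teq3 sc (delta2 \<Delta> h) (delta2' \<Delta> h))
   \<and> lin_fun sc \<epsilon>
   \<and> (\<forall>h. (\<Sum>(a,b)\<leftarrow>\<Delta> h. sc (\<epsilon> a) b) = h)
   \<and> (\<forall>h. (\<Sum>(a,b)\<leftarrow>\<Delta> h. sc (\<epsilon> b) a) = h)
   \<and> (\<forall>a b. teq2 sc (\<Delta> (a * b)) (concat (map (\<lambda>(x,y). map (\<lambda>(u,v). (x * u, y * v)) (\<Delta> b)) (\<Delta> a))))
   \<and> teq2 sc (\<Delta> 1) [(1, 1)]
   \<and> (\<forall>a b. \<epsilon> (a * b) = \<epsilon> a * \<epsilon> b) \<and> \<epsilon> 1 = 1
   \<and> (\<forall>a b. S (a + b) = S a + S b) \<and> (\<forall>c a. S (sc c a) = sc c (S a))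
   \<and> (\<forall>h. (\<Sum>(a,b)\<leftarrow>\<Delta> h. S a * b) = sc (\<epsilon> h) 1)
   \<and> (\<forall>h. (\<Sum>(a,b)\<leftarrow>\<Delta> h. a * S b) = sc (\<epsilon> h) 1)"

definition conv2 :: "('h \<Rightarrow> ('h \<times> 'h) list) \<Rightarrow> ('h \<Rightarrow> 'h \<Rightarrow> 'k::field) \<Rightarrow> ('h \<Rightarrow> 'h \<Rightarrow> 'k) \<Rightarrow> 'h \<Rightarrow> 'h \<Rightarrow> 'k" where
  "conv2 \<Delta> s t h g = (\<Sum>(h1,h2)\<leftarrow>\<Delta> h. \<Sum>(g1,g2)\<leftarrow>\<Delta> g. s h1 g1 * t h2 g2)"

definition bilin :: "('k::field \<Rightarrow> 'h::ab_group_add \<Rightarrow> 'h) \<Rightarrow> ('h \<Rightarrow> 'h \<Rightarrow> 'k) \<Rightarrow> bool" where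
  "bilin sc s \<longleftrightarrow> (\<forall>g. lin_fun sc (\<lambda>h. s h g)) \<and> (\<forall>h. lin_fun sc (s h))"

definition cqt :: "('k::field \<Rightarrow> 'h::ring_1 \<Rightarrow> 'h) \<Rightarrow> ('h \<Rightarrow> ('h \<times> 'h) list) \<Rightarrow> ('h \<Rightarrow> 'k) \<Rightarrow> ('h \<Rightarrow> 'h \<Rightarrow> 'k) \<Rightarrow> bool" where
  "cqt sc \<Delta> \<epsilon> \<sigma> \<longleftrightarrow>
     bilin sc \<sigma>
   \<and> (\<exists>\<sigma>'. bilin sc \<sigma>' \<and> (\<forall>h g. conv2 \<Delta> \<sigma> \<sigma>' h g = \<epsilon> h * \<epsilon> g \<and> conv2 \<Delta> \<sigma>' \<sigma> h g = \<epsilon> h * \<epsilon> g))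
   \<and> (\<forall>h h' g. \<sigma> (h * h') g = (\<Sum>(g1,g2)\<leftarrow>\<Delta> g. \<sigma> h g1 * \<sigma> h' g2))
   \<and> (\<forall>g h h'. \<sigma> g (h * h') = (\<Sum>(g1,g2)\<leftarrow>\<Delta> g. \<sigma> g2 h * \<sigma> g1 h'))
   \<and> (\<forall>h. \<sigma> 1 h = \<epsilon> h \<and> \<sigma> h 1 = \<epsilon> h)
   \<and> (\<forall>h h'. (\<Sum>(h1,h2)\<leftarrow>\<Delta> h. \<Sum>(k1,k2)\<leftarrow>\<Delta> h'. sc (\<sigma> h1 k1) (h2 * k2))
           = (\<Sum>(h1,h2)\<leftarrow>\<Delta> h. \<Sum>(k1,k2)\<leftarrow>\<Delta> h'. sc (\<sigma> h2 k2) (k1 * h1)))"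

definition sub_hopf :: "('k::field \<Rightarrow> 'h::ring_1 \<Rightarrow> 'h) \<Rightarrow> ('h \<Rightarrow> ('h \<times> 'h) list) \<Rightarrow> ('h \<Rightarrow> 'h) \<Rightarrow> 'h set \<Rightarrow> bool" where
  "sub_hopf sc \<Delta> S X \<longleftrightarrow>
     0 \<in> X \<and> (\<forall>a\<in>X. \<forall>b\<in>X. a + b \<in> X) \<and> (\<forall>c. \<forall>a\<in>X. sc c a \<in> X)
   \<and> 1 \<in> X \<and> (\<forall>a\<in>X. \<forall>b\<in>X. a * b \<in> X)
   \<and> (\<forall>x\<in>X. \<exists>L. set L \<subseteq> X \<times> X \<and> teq2 sc L (\<Delta> x))
   \<and> S ` X = X"

definition conv :: "('h \<Rightarrow> ('h \<times> 'h) list) \<Rightarrow> ('h \<Rightarrow> 'k::field) \<Rightarrow> ('h \<Rightarrow> 'k) \<Rightarrow> 'h \<Rightarrow> 'k" where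
  "conv \<Delta> \<phi> \<psi> = (\<lambda>h. \<Sum>(a,b)\<leftarrow>\<Delta> h. \<phi> a * \<psi> b)"

definition lmap :: "('h \<Rightarrow> 'h \<Rightarrow> 'k) \<Rightarrow> 'h \<Rightarrow> 'h \<Rightarrow> 'k" where
  "lmap \<sigma> x = (\<lambda>h. \<sigma> h x)"

definition rmap :: "('h \<Rightarrow> 'h \<Rightarrow> 'k) \<Rightarrow> 'h \<Rightarrow> 'h \<Rightarrow> 'k" where
  "rmap \<sigma> a = (\<lambda>h. \<sigma> a h)"

definition HXA :: "('h \<Rightarrow> ('h \<times> 'h) list) \<Rightarrow> ('h \<Rightarrow> 'h \<Rightarrow> 'k::field) \<Rightarrow> 'h set \<Rightarrow> 'h set \<Rightarrow> ('h \<Rightarrow> 'k) set" where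
  "HXA \<Delta> \<sigma> X A = {\<phi>. \<exists>L. (\<forall>(c,x,a)\<in>set L. x \<in> X \<and> a \<in> A) \<and>
        \<phi> = (\<lambda>h. \<Sum>(c,x,a)\<leftarrow>L. c * conv \<Delta> (lmap \<sigma> x) (rmap \<sigma> a) h)}"

text \<open>The double D = H_{X,A} \<otimes> X.  A formal sum \<Sum> m_i \<otimes> x_i (list of pairs) is identified
  with the map h \<mapsto> \<Sum> m_i(h) x_i (canonical injection H^0 \<otimes> X \<rightarrow> Hom(H,X)).\<close>
definition evD :: "('k::field \<Rightarrow> 'h::ring_1 \<Rightarrow> 'h) \<Rightarrow> (('h \<Rightarrow> 'k) \<times> 'h) list \<Rightarrow> 'h \<Rightarrow> 'h" where
  "evD sc L = (\<lambda>h. \<Sum>(m,y)\<leftarrow>L. sc (m h) y)"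

definition Dvalid :: "('h \<Rightarrow> 'k) set \<Rightarrow> 'h set \<Rightarrow> (('h \<Rightarrow> 'k) \<times> 'h) list \<Rightarrow> bool" where
  "Dvalid K X L \<longleftrightarrow> (\<forall>(m,y)\<in>set L. m \<in> K \<and> y \<in> X)"

definition Dset :: "('k::field \<Rightarrow> 'h::ring_1 \<Rightarrow> 'h) \<Rightarrow> ('h \<Rightarrow> 'k) set \<Rightarrow> 'h set \<Rightarrow> ('h \<Rightarrow> 'h) set" where
  "Dset sc K X = {evD sc L | L. Dvalid K X L}"

text \<open>Multiplication of D on formal sums:
  (m \<otimes> x)(n \<otimes> y) = \<langle>n_3,x_1\<rangle>\<langle>S^{-1}(n_1),x_3\<rangle> m n_2 \<otimes> x_2 y, where (Sweedler in H^0)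
  \<langle>n_3,x_1\<rangle>\<langle>S^{-1}(n_1),x_3\<rangle> n_2 is the functional b \<mapsto> n(S^{-1}(x_3) b x_1).\<close>
definition multD :: "('h::ring_1 \<Rightarrow> ('h \<times> 'h) list) \<Rightarrow> ('h \<Rightarrow> 'h) \<Rightarrow> (('h \<Rightarrow> 'k::field) \<times> 'h) list
     \<Rightarrow> (('h \<Rightarrow> 'k) \<times> 'h) list \<Rightarrow> (('h \<Rightarrow> 'k) \<times> 'h) list" where
  "multD \<Delta> Sinv L M = concat (map (\<lambda>(m,x). concat (map (\<lambda>(n,y).
      map (\<lambda>(x1,x2,x3). (conv \<Delta> m (\<lambda>b. n (Sinv x3 * b * x1)), x2 * y)) (delta2 \<Delta> x)) M)) L)"

definition iD :: "('h::ring_1 \<Rightarrow> 'k) \<Rightarrow> (('h \<Rightarrow> 'k) \<times> 'h) list" where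
  "iD \<phi> = [(\<phi>, 1)]"

text \<open>For d = \<Sum> m \<otimes> x: the element d_1 \<otimes> \<pi>(d_2) of D \<otimes> H_{X,A}, with
  \<Delta>(m \<otimes> x) = (m_2 \<otimes> x_1) \<otimes> (m_1 \<otimes> x_2) and \<pi>(m \<otimes> y) = m l_{S^{-1}(y)}, evaluated with the
  first H^0-factor at h and the last at h':  \<Sum> m(h'_1 h) \<sigma>(h'_2, S^{-1}(x_2)) x_1.\<close>
definition B_lhs :: "('k::field \<Rightarrow> 'h::ring_1 \<Rightarrow> 'h) \<Rightarrow> ('h \<Rightarrow> ('h \<times> 'h) list) \<Rightarrow> ('h \<Rightarrow> 'h \<Rightarrow> 'k) \<Rightarrow> ('h \<Rightarrow> 'h)
     \<Rightarrow> (('h \<Rightarrow> 'k) \<times> 'h) list \<Rightarrow> 'h \<Rightarrow> 'h \<Rightarrow> 'h" where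
  "B_lhs sc \<Delta> \<sigma> Sinv L h h' = (\<Sum>(m,x)\<leftarrow>L. \<Sum>(x1,x2)\<leftarrow>\<Delta> x. \<Sum>(a,b)\<leftarrow>\<Delta> h'.
       sc (m (a * h) * \<sigma> b (Sinv x2)) x1)"

text \<open>d \<otimes> 1 (the unit of H_{X,A} is \<epsilon>), evaluated in the same way.\<close>
definition B_rhs :: "('k::field \<Rightarrow> 'h::ring_1 \<Rightarrow> 'h) \<Rightarrow> ('h \<Rightarrow> 'k) \<Rightarrow> (('h \<Rightarrow> 'k) \<times> 'h) list \<Rightarrow> 'h \<Rightarrow> 'h \<Rightarrow> 'h" where
  "B_rhs sc \<epsilon> L h h' = (\<Sum>(m,x)\<leftarrow>L. sc (m h * \<epsilon> h') x)"

definition Bset :: "('k::field \<Rightarrow> 'h::ring_1 \<Rightarrow> 'h) \<Rightarrow> ('h \<Rightarrow> ('h \<times> 'h) list) \<Rightarrow> ('h \<Rightarrow> 'k) \<Rightarrow> ('h \<Rightarrow> 'h)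
     \<Rightarrow> ('h \<Rightarrow> 'h \<Rightarrow> 'k) \<Rightarrow> 'h set \<Rightarrow> 'h set \<Rightarrow> ('h \<Rightarrow> 'h) set" where
  "Bset sc \<Delta> \<epsilon> S \<sigma> X A = {evD sc L | L. Dvalid (HXA \<Delta> \<sigma> X A) X L \<and>
       (\<forall>h h'. B_lhs sc \<Delta> \<sigma> (inv S) L h h' = B_rhs sc \<epsilon> L h h')}"

definition thetaL :: "('h \<Rightarrow> ('h \<times> 'h) list) \<Rightarrow> ('h \<Rightarrow> 'h \<Rightarrow> 'k) \<Rightarrow> ('h \<Rightarrow> 'h) \<Rightarrow> 'h \<Rightarrow> (('h \<Rightarrow> 'k) \<times> 'h) list" where
  "thetaL \<Delta> \<sigma> Sinv x = map (\<lambda>(x1,x2). (lmap \<sigma> (Sinv (Sinv x2)), x1)) (\<Delta> x)"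

definition theta :: "('k::field \<Rightarrow> 'h::ring_1 \<Rightarrow> 'h) \<Rightarrow> ('h \<Rightarrow> ('h \<times> 'h) list) \<Rightarrow> ('h \<Rightarrow> 'h \<Rightarrow> 'k) \<Rightarrow> ('h \<Rightarrow> 'h) \<Rightarrow> 'h \<Rightarrow> 'h \<Rightarrow> 'h" where
  "theta sc \<Delta> \<sigma> S x = evD sc (thetaL \<Delta> \<sigma> (inv S) x)"

text \<open>Action of \<phi> = l_x r_a on d \<in> B:  i(\<phi>_(1)) d i(S_{cop}(\<phi>_(2))), where in H_{X,A}^cop
  \<phi>_(1) \<otimes> \<phi>_(2) = l_{x_2} r_{a_1} \<otimes> l_{x_1} r_{a_2} (the flip of
  \<Delta>(l_x r_a) = l_{x_1} r_{a_2} \<otimes> l_{x_2} r_{a_1}) and S_{cop}(\<psi>) = \<psi> \<circ> S^{-1}.\<close>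
definition actB :: "('h::ring_1 \<Rightarrow> ('h \<times> 'h) list) \<Rightarrow> ('h \<Rightarrow> 'h \<Rightarrow> 'k::field) \<Rightarrow> ('h \<Rightarrow> 'h) \<Rightarrow> 'h \<Rightarrow> 'h
     \<Rightarrow> (('h \<Rightarrow> 'k) \<times> 'h) list \<Rightarrow> (('h \<Rightarrow> 'k) \<times> 'h) list" where
  "actB \<Delta> \<sigma> S x a L = concat (map (\<lambda>((x1,x2),(a1,a2)).
      multD \<Delta> (inv S) (multD \<Delta> (inv S) (iD (conv \<Delta> (lmap \<sigma> x2) (rmap \<sigma> a1))) L)
            (iD (conv \<Delta> (lmap \<sigma> x1) (rmap \<sigma> a2) \<circ> inv S)))
      (List.product (\<Delta> x) (\<Delta> a)))"

text \<open>Coaction of B, d \<mapsto> \<pi>(d_1) \<otimes> d_2 \<in> H_{X,A} \<otimes> D, evaluated with the H_{X,A}-factor at h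
  and the D-factor at h':  \<Sum> m(h' h_1) \<sigma>(h_2, S^{-1}(x_1)) x_2.\<close>
definition coactB :: "('k::field \<Rightarrow> 'h::ring_1 \<Rightarrow> 'h) \<Rightarrow> ('h \<Rightarrow> ('h \<times> 'h) list) \<Rightarrow> ('h \<Rightarrow> 'h \<Rightarrow> 'k) \<Rightarrow> ('h \<Rightarrow> 'h)
     \<Rightarrow> (('h \<Rightarrow> 'k) \<times> 'h) list \<Rightarrow> 'h \<Rightarrow> 'h \<Rightarrow> 'h" where
  "coactB sc \<Delta> \<sigma> S L h h' = (\<Sum>(m,x)\<leftarrow>L. \<Sum>(x1,x2)\<leftarrow>\<Delta> x. \<Sum>(h1,h2)\<leftarrow>\<Delta> h.
       sc (m (h' * h1) * \<sigma> h2 (inv S x1)) x2)"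

definition actX :: "('k::field \<Rightarrow> 'h::ring_1 \<Rightarrow> 'h) \<Rightarrow> ('h \<Rightarrow> ('h \<times> 'h) list) \<Rightarrow> ('h \<Rightarrow> 'h) \<Rightarrow> ('h \<Rightarrow> 'k) \<Rightarrow> 'h \<Rightarrow> 'h" where
  "actX sc \<Delta> S \<phi> y = (\<Sum>(y1,y2,y3)\<leftarrow>delta2 \<Delta> y. sc (\<phi> (inv S y1 * inv S (inv S y3))) y2)"

definition coactX :: "('k::field \<Rightarrow> 'h::ring_1 \<Rightarrow> 'h) \<Rightarrow> ('h \<Rightarrow> ('h \<times> 'h) list) \<Rightarrow> ('h \<Rightarrow> 'h \<Rightarrow> 'k) \<Rightarrow> ('h \<Rightarrow> 'h) \<Rightarrow> 'h \<Rightarrow> 'h \<Rightarrow> 'h" where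
  "coactX sc \<Delta> \<sigma> S y = (\<lambda>h. \<Sum>(y1,y2,y3)\<leftarrow>delta2 \<Delta> y. sc (\<sigma> h (inv S y1 * inv S (inv S y3))) y2)"

text \<open>Left Yetter-Drinfeld module over H_{X,A}^cop (product = convolution, unit \<epsilon>,
  \<Delta>^cop(\<phi>)(a \<otimes> b) = \<phi>(b a), counit \<phi> \<mapsto> \<phi>(1)), with all H_{X,A}-factors evaluated:
  module axioms; comodule axioms (\<Delta>^cop \<otimes> id)\<lambda> = (id \<otimes> \<lambda>)\<lambda>, (\<epsilon> \<otimes> id)\<lambda> = id;
  compatibility \<phi>_(1) y_{-1} \<otimes> \<phi>_(2) \<triangleright> y_0 = (\<phi>_(1) \<triangleright> y)_{-1} \<phi>_(2) \<otimes> (\<phi>_(1) \<triangleright> y)_0.\<close>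
definition left_YD :: "('k::field \<Rightarrow> 'h::ring_1 \<Rightarrow> 'h) \<Rightarrow> ('h \<Rightarrow> ('h \<times> 'h) list) \<Rightarrow> ('h \<Rightarrow> 'k)
     \<Rightarrow> ('h \<Rightarrow> 'k) set \<Rightarrow> 'h set \<Rightarrow> (('h \<Rightarrow> 'k) \<Rightarrow> 'h \<Rightarrow> 'h) \<Rightarrow> ('h \<Rightarrow> 'h \<Rightarrow> 'h) \<Rightarrow> bool" where
  "left_YD sc \<Delta> \<epsilon> K X act coact \<longleftrightarrow>
     (\<forall>\<phi>\<in>K. \<forall>y\<in>X. act \<phi> y \<in> X)
   \<and> (\<forall>\<phi>\<in>K. \<forall>y\<in>X. \<forall>z\<in>X. act \<phi> (y + z) = act \<phi> y + act \<phi> z)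
   \<and> (\<forall>\<phi>\<in>K. \<forall>c. \<forall>y\<in>X. act \<phi> (sc c y) = sc c (act \<phi> y))
   \<and> (\<forall>\<phi>\<in>K. \<forall>\<psi>\<in>K. \<forall>y\<in>X. act (\<lambda>h. \<phi> h + \<psi> h) y = act \<phi> y + act \<psi> y)
   \<and> (\<forall>\<phi>\<in>K. \<forall>c. \<forall>y\<in>X. act (\<lambda>h. c * \<phi> h) y = sc c (act \<phi> y))
   \<and> (\<forall>y\<in>X. act \<epsilon> y = y)
   \<and> (\<forall>\<phi>\<in>K. \<forall>\<psi>\<in>K. \<forall>y\<in>X. act (conv \<Delta> \<phi> \<psi>) y = act \<phi> (act \<psi> y))
   \<and> (\<forall>y\<in>X. coact y \<in> Dset sc K X)
   \<and> (\<forall>y\<in>X. \<forall>z\<in>X. coact (y + z) = (\<lambda>h. coact y h + coact z h))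
   \<and> (\<forall>c. \<forall>y\<in>X. coact (sc c y) = (\<lambda>h. sc c (coact y h)))
   \<and> (\<forall>y\<in>X. \<forall>h h'. coact (coact y h) h' = coact y (h' * h))
   \<and> (\<forall>y\<in>X. coact y 1 = y)
   \<and> (\<forall>\<phi>\<in>K. \<forall>y\<in>X. \<forall>h.
        (\<Sum>(h1,h2)\<leftarrow>\<Delta> h. act (\<lambda>w. \<phi> (w * h1)) (coact y h2))
      = (\<Sum>(h1,h2)\<leftarrow>\<Delta> h. coact (act (\<lambda>w. \<phi> (h2 * w)) y) h1))"

end

theory Submission
  imports Defs
begin

lemma vs_field: "vector_space ((*) :: 'k::field \<Rightarrow> 'k \<Rightarrow> 'k)"
  apply unfold_locales
  apply (rule distrib_left)
  apply (rule distrib_right)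
  apply (simp add: mult.assoc)
  apply simp
  done

lemma coord:
  fixes sc :: "'k::field \<Rightarrow> 'h::ab_group_add \<Rightarrow> 'h"
  assumes vs: "vector_space sc" and fin: "finite V"
  shows "\<exists>B g. finite B \<and> (\<forall>e\<in>B. lin_fun sc (g e)) \<and> (\<forall>a\<in>V. a = (\<Sum>e\<in>B. sc (g e a) e))"
proof -
  interpret vs: vector_space sc by (rule vs)
  interpret vp: vector_space_pair sc "(*) :: 'k \<Rightarrow> 'k \<Rightarrow> 'k"
    unfolding vector_space_pair_def using vs vs_field by blast
  obtain B where B: "B \<subseteq> V" "vs.independent B" "V \<subseteq> vs.span B"
    by (rule vs.maximal_independent_subset)
  have finB: "finite B" using B(1) fin by (rule finite_subset)
  have "\<forall>e\<in>B. \<exists>g. Vector_Spaces.linear sc (*) g \<and> (\<forall>x\<in>B. g x = (if x = e then 1 else 0))"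
  proof
    fix e assume "e \<in> B"
    show "\<exists>g. Vector_Spaces.linear sc (*) g \<and> (\<forall>x\<in>B. g x = (if x = e then 1 else 0))"
      using vp.linear_independent_extend[OF B(2), of "\<lambda>x. if x = e then 1 else 0"] by simp
  qed
  then obtain g where g: "\<And>e. e \<in> B \<Longrightarrow> Vector_Spaces.linear sc (*) (g e) \<and> (\<forall>x\<in>B. g e x = (if x = e then 1 else 0))"
    by metis
  have lin: "\<forall>e\<in>B. lin_fun sc (g e)"
    using g by (auto simp: lin_fun_def linear_iff)
  have rep: "a = (\<Sum>e\<in>B. sc (g e a) e)" if "a \<in> V" for a
  proof -
    from that B(3) have "a \<in> vs.span B" by auto
    then obtain u where u: "a = (\<Sum>v\<in>B. sc (u v) v)" using vs.span_finite[OF finB] by auto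
    have "g e a = u e" if e: "e \<in> B" for e
    proof -
      have lg: "Vector_Spaces.linear sc (*) (g e)" using g e by auto
      have "g e a = (\<Sum>v\<in>B. u v * g e v)"
        unfolding u using lg by (simp add: vp.linear_sum[OF lg] vp.linear_scale[OF lg] comp_def)
      also have "\<dots> = (\<Sum>v\<in>B. if v = e then u v else 0)"
        using g e by (intro sum.cong) auto
      also have "\<dots> = u e" using e finB by simp
      finally show ?thesis .
    qed
    then show ?thesis using u by (metis (no_types, lifting) sum.cong)
  qed
  show ?thesis using finB lin rep by blast
qed


definition linH :: "('k::field \<Rightarrow> 'h::ab_group_add \<Rightarrow> 'h) \<Rightarrow> ('h \<Rightarrow> 'h) \<Rightarrow> bool" where
  "linH sc f \<longleftrightarrow> (\<forall>a b. f (a + b) = f a + f b) \<and> (\<forall>c a. f (sc c a) = sc c (f a))"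

lemma sum_list_sum_swap:
  "sum_list (map (\<lambda>x. \<Sum>e\<in>B. G x e) L) = (\<Sum>e\<in>B. sum_list (map (\<lambda>x. G x e) L))"
  by (induction L) (auto simp: sum.distrib)

lemma sum_list_swap:
  fixes G :: "'a \<Rightarrow> 'b \<Rightarrow> 'c::comm_monoid_add"
  shows "sum_list (map (\<lambda>x. sum_list (map (\<lambda>y. G x y) M)) L) = sum_list (map (\<lambda>y. sum_list (map (\<lambda>x. G x y) L)) M)"
proof (induction L)
  case Nil
  then show ?case by (induction M) auto
next
  case (Cons a L)
  then show ?case by (simp add: sum_list_addf)
qed

lemma sum_list_mult_left: "(c::'a::semiring_0) * sum_list (map f L) = sum_list (map (\<lambda>x. c * f x) L)"
  by (induction L) (auto simp: distrib_left)

lemma sum_list_mult_right: "sum_list (map f L) * (c::'a::semiring_0) = sum_list (map (\<lambda>x. f x * c) L)"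
  by (induction L) (auto simp: distrib_right)

locale HC =
  fixes sc :: "'k::field \<Rightarrow> 'h::ring_1 \<Rightarrow> 'h"
    and \<Delta> :: "'h \<Rightarrow> ('h \<times> 'h) list" and \<epsilon> :: "'h \<Rightarrow> 'k" and S :: "'h \<Rightarrow> 'h"
    and \<sigma> :: "'h \<Rightarrow> 'h \<Rightarrow> 'k" and X A :: "'h set"
  assumes hopf: "hopf_algebra sc \<Delta> \<epsilon> S"
    and Sbij: "bij S"
    and cqt: "cqt sc \<Delta> \<epsilon> \<sigma>"
    and subX: "sub_hopf sc \<Delta> S X"
    and subA: "sub_hopf sc \<Delta> S A"
begin

abbreviation linK :: "('h \<Rightarrow> 'k) \<Rightarrow> bool" where "linK f \<equiv> lin_fun sc f"
abbreviation linHH :: "('h \<Rightarrow> 'h) \<Rightarrow> bool" where "linHH f \<equiv> linH sc f"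

definition bilK :: "('h \<Rightarrow> 'h \<Rightarrow> 'k) \<Rightarrow> bool" where
  "bilK F \<longleftrightarrow> (\<forall>b. linK (\<lambda>a. F a b)) \<and> (\<forall>a. linK (\<lambda>b. F a b))"
definition triK :: "('h \<Rightarrow> 'h \<Rightarrow> 'h \<Rightarrow> 'k) \<Rightarrow> bool" where
  "triK F \<longleftrightarrow> (\<forall>b c. linK (\<lambda>a. F a b c)) \<and> (\<forall>a c. linK (\<lambda>b. F a b c)) \<and> (\<forall>a b. linK (\<lambda>c. F a b c))"

lemma bilKI: "(\<And>b. linK (\<lambda>a. F a b)) \<Longrightarrow> (\<And>a. linK (\<lambda>b. F a b)) \<Longrightarrow> bilK F"
  by (auto simp: bilK_def)
lemma triKI: "(\<And>b c. linK (\<lambda>a. F a b c)) \<Longrightarrow> (\<And>a c. linK (\<lambda>b. F a b c)) \<Longrightarrow> (\<And>a b. linK (\<lambda>c. F a b c)) \<Longrightarrow> triK F"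
  by (auto simp: triK_def)
lemma bilKD: "bilK F \<Longrightarrow> linK (\<lambda>a. F a b)" "bilK F \<Longrightarrow> linK (\<lambda>b. F a b)"
  by (auto simp: bilK_def)
lemma triKD: "triK F \<Longrightarrow> linK (\<lambda>a. F a b c)" "triK F \<Longrightarrow> linK (\<lambda>b. F a b c)" "triK F \<Longrightarrow> linK (\<lambda>c. F a b c)"
  by (auto simp: triK_def)

lemma vs: "vector_space sc" using hopf by (simp add: hopf_algebra_def)

sublocale vs: vector_space sc by (rule vs)

lemma sc_mult1: "sc c (a * b) = sc c a * b"
  using hopf unfolding hopf_algebra_def by blast
lemma sc_mult2: "sc c (a * b) = a * sc c b"
  using hopf unfolding hopf_algebra_def by blast

lemma linK_add: "linK f \<Longrightarrow> f (a + b) = f a + f b" by (simp add: lin_fun_def)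
lemma linK_sc: "linK f \<Longrightarrow> f (sc c a) = c * f a" by (simp add: lin_fun_def)
lemma linK_0: "linK f \<Longrightarrow> f 0 = 0"
  using linK_add[of f 0 0] by (metis add_0 add_cancel_right_right)
lemma linK_neg: "linK f \<Longrightarrow> f (- a) = - f a"
  using linK_add[of f a "- a"] linK_0[of f] by (metis minus_unique right_minus)
lemma linK_diff: "linK f \<Longrightarrow> f (a - b) = f a - f b"
  using linK_add[of f a "- b"] linK_neg[of f b] by simp
lemma linK_sum_list: "linK f \<Longrightarrow> f (sum_list (map g L)) = sum_list (map (\<lambda>x. f (g x)) L)"
  by (induction L) (auto simp: linK_add linK_0)
lemma linK_sum: "linK f \<Longrightarrow> f (sum g B) = (\<Sum>x\<in>B. f (g x))"
  by (induction B rule: infinite_finite_induct) (auto simp: linK_add linK_0)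

lemma linH_add: "linHH f \<Longrightarrow> f (a + b) = f a + f b" by (simp add: linH_def)
lemma linH_sc: "linHH f \<Longrightarrow> f (sc c a) = sc c (f a)" by (simp add: linH_def)

lemma sepH:
  assumes "\<And>f. linK f \<Longrightarrow> f u = f v"
  shows "u = v"
proof -
  obtain B g where B: "finite B" "\<forall>e\<in>B. linK (g e)" "\<forall>a\<in>{u - v}. a = (\<Sum>e\<in>B. sc (g e a) e)"
    using coord[OF vs, of "{u - v}"] by blast
  have "u - v = (\<Sum>e\<in>B. sc (g e (u - v)) e)" using B(3) by auto
  also have "\<dots> = (\<Sum>e\<in>B. sc 0 e)"
    using B(2) assms by (intro sum.cong) (auto simp: linK_diff)
  also have "\<dots> = 0" by simp
  finally show ?thesis by simp
qed

lemma expand1: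
  assumes fin: "finite V"
  obtains B g where "finite B" "\<forall>e\<in>B. linK (g e)"
    "\<And>F a. a \<in> V \<Longrightarrow> linK F \<Longrightarrow> F a = (\<Sum>e\<in>B. g e a * F e)"
proof -
  obtain B g where B: "finite B" "\<forall>e\<in>B. linK (g e)" "\<forall>a\<in>V. a = (\<Sum>e\<in>B. sc (g e a) e)"
    using coord[OF vs fin] by blast
  have "F a = (\<Sum>e\<in>B. g e a * F e)" if "a \<in> V" "linK F" for F a
  proof -
    have "F a = F (\<Sum>e\<in>B. sc (g e a) e)" using B(3) that(1) by metis
    also have "\<dots> = (\<Sum>e\<in>B. g e a * F e)" using that(2) by (simp add: linK_sum linK_sc)
    finally show ?thesis .
  qed
  then show ?thesis using that B(1,2) by blast
qed

lemma teq2_sum: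
  assumes "teq2 sc L M" "bilK F"
  shows "(\<Sum>(a,b)\<leftarrow>L. F a b) = (\<Sum>(a,b)\<leftarrow>M. F a b)"
proof -
  obtain B g where B: "finite B" "\<forall>e\<in>B. linK (g e)"
    "\<And>F a. a \<in> fst ` set (L @ M) \<Longrightarrow> linK F \<Longrightarrow> F a = (\<Sum>e\<in>B. g e a * F e)"
    using expand1[of "fst ` set (L @ M)"] by blast
  have ex: "F a b = (\<Sum>e\<in>B. g e a * F e b)" if "(a,b) \<in> set (L @ M)" for a b
    using B(3)[of a "\<lambda>x. F x b"] that bilKD(1)[OF assms(2)] by force
  have "(\<Sum>(a,b)\<leftarrow>L. F a b) = (\<Sum>(a,b)\<leftarrow>L. \<Sum>e\<in>B. g e a * F e b)"
    by (intro arg_cong[where f=sum_list] map_cong) (auto simp: ex)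
  also have "\<dots> = (\<Sum>e\<in>B. \<Sum>(a,b)\<leftarrow>L. g e a * F e b)"
    by (subst sum_list_sum_swap[symmetric]) (simp add: split_def)
  also have "\<dots> = (\<Sum>e\<in>B. \<Sum>(a,b)\<leftarrow>M. g e a * F e b)"
    using assms(1) B(2) bilKD(2)[OF assms(2)] by (intro sum.cong) (auto simp: teq2_def)
  also have "\<dots> = (\<Sum>(a,b)\<leftarrow>M. \<Sum>e\<in>B. g e a * F e b)"
    by (subst sum_list_sum_swap[symmetric]) (simp add: split_def)
  also have "\<dots> = (\<Sum>(a,b)\<leftarrow>M. F a b)"
    by (intro arg_cong[where f=sum_list] map_cong) (auto simp: ex)
  finally show ?thesis .
qed

lemma teq3_sum:
  assumes "teq3 sc L M" "triK F"
  shows "(\<Sum>(a,b,c)\<leftarrow>L. F a b c) = (\<Sum>(a,b,c)\<leftarrow>M. F a b c)"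
proof -
  obtain B g where B: "finite B" "\<forall>e\<in>B. linK (g e)"
    "\<And>F a. a \<in> fst ` set (L @ M) \<Longrightarrow> linK F \<Longrightarrow> F a = (\<Sum>e\<in>B. g e a * F e)"
    using expand1[of "fst ` set (L @ M)"] by blast
  obtain C k where C: "finite C" "\<forall>e\<in>C. linK (k e)"
    "\<And>F a. a \<in> (fst \<circ> snd) ` set (L @ M) \<Longrightarrow> linK F \<Longrightarrow> F a = (\<Sum>e\<in>C. k e a * F e)"
    using expand1[of "(fst \<circ> snd) ` set (L @ M)"] by blast
  have ex: "F a b c = (\<Sum>e\<in>B. \<Sum>e'\<in>C. g e a * k e' b * F e e' c)" if "(a,b,c) \<in> set (L @ M)" for a b c
  proof -
    have "F a b c = (\<Sum>e\<in>B. g e a * F e b c)"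
      using B(3)[of a "\<lambda>x. F x b c"] that triKD(1)[OF assms(2)] by force
    also have "\<dots> = (\<Sum>e\<in>B. g e a * (\<Sum>e'\<in>C. k e' b * F e e' c))"
      using C(3)[of b "\<lambda>x. F _ x c"] that triKD(2)[OF assms(2)] by (intro sum.cong refl) force
    also have "\<dots> = (\<Sum>e\<in>B. \<Sum>e'\<in>C. g e a * k e' b * F e e' c)"
      by (simp add: sum_distrib_left mult.assoc)
    finally show ?thesis .
  qed
  have "(\<Sum>(a,b,c)\<leftarrow>L. F a b c) = (\<Sum>(a,b,c)\<leftarrow>L. \<Sum>e\<in>B. \<Sum>e'\<in>C. g e a * k e' b * F e e' c)"
    by (intro arg_cong[where f=sum_list] map_cong) (auto simp: ex)
  also have "\<dots> = (\<Sum>e\<in>B. \<Sum>e'\<in>C. \<Sum>(a,b,c)\<leftarrow>L. g e a * k e' b * F e e' c)"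
    by (simp add: sum_list_sum_swap[symmetric] split_def)
  also have "\<dots> = (\<Sum>e\<in>B. \<Sum>e'\<in>C. \<Sum>(a,b,c)\<leftarrow>M. g e a * k e' b * F e e' c)"
    using assms(1) B(2) C(2) triKD(3)[OF assms(2)] by (intro sum.cong) (auto simp: teq3_def)
  also have "\<dots> = (\<Sum>(a,b,c)\<leftarrow>M. \<Sum>e\<in>B. \<Sum>e'\<in>C. g e a * k e' b * F e e' c)"
    by (simp add: sum_list_sum_swap[symmetric] split_def)
  also have "\<dots> = (\<Sum>(a,b,c)\<leftarrow>M. F a b c)"
    by (intro arg_cong[where f=sum_list] map_cong) (auto simp: ex)
  finally show ?thesis .
qed

end

lemma sum_list_concat_gen: "sum_list (concat xs) = sum_list (map sum_list (xs :: 'a::monoid_add list list))"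
  by (induction xs) auto

lemma sum_list_map_concat: "sum_list (map f (concat xs)) = sum_list (map (\<lambda>x. sum_list (map f x)) xs)"
  by (induction xs) auto

context HC
begin

lemma hopf_unf:
  "\<And>a b. teq2 sc (\<Delta> (a + b)) (\<Delta> a @ \<Delta> b)"
  "\<And>c a. teq2 sc (\<Delta> (sc c a)) (map (\<lambda>(x,y). (sc c x, y)) (\<Delta> a))"
  "\<And>h. teq3 sc (delta2 \<Delta> h) (delta2' \<Delta> h)"
  "lin_fun sc \<epsilon>"
  "\<And>h. (\<Sum>(a,b)\<leftarrow>\<Delta> h. sc (\<epsilon> a) b) = h"
  "\<And>h. (\<Sum>(a,b)\<leftarrow>\<Delta> h. sc (\<epsilon> b) a) = h"
  "\<And>a b. teq2 sc (\<Delta> (a * b)) (concat (map (\<lambda>(x,y). map (\<lambda>(u,v). (x * u, y * v)) (\<Delta> b)) (\<Delta> a)))"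
  "teq2 sc (\<Delta> 1) [(1, 1)]"
  "\<And>a b. \<epsilon> (a * b) = \<epsilon> a * \<epsilon> b" "\<epsilon> 1 = 1"
  "\<And>a b. S (a + b) = S a + S b" "\<And>c a. S (sc c a) = sc c (S a)"
  "\<And>h. (\<Sum>(a,b)\<leftarrow>\<Delta> h. S a * b) = sc (\<epsilon> h) 1"
  "\<And>h. (\<Sum>(a,b)\<leftarrow>\<Delta> h. a * S b) = sc (\<epsilon> h) 1"
  using hopf unfolding hopf_algebra_def by blast+

lemma eps_lin: "linK \<epsilon>" by (rule hopf_unf(4))
lemma eps_mult: "\<epsilon> (a * b) = \<epsilon> a * \<epsilon> b" by (rule hopf_unf(9))
lemma eps_1: "\<epsilon> 1 = 1" by (rule hopf_unf(10))
lemma S_lin: "linHH S" unfolding linH_def using hopf_unf(11,12) by blast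

lemma cqt_unf:
  "bilin sc \<sigma>"
  "\<And>h h' g. \<sigma> (h * h') g = (\<Sum>(g1,g2)\<leftarrow>\<Delta> g. \<sigma> h g1 * \<sigma> h' g2)"
  "\<And>g h h'. \<sigma> g (h * h') = (\<Sum>(g1,g2)\<leftarrow>\<Delta> g. \<sigma> g2 h * \<sigma> g1 h')"
  "\<And>h. \<sigma> 1 h = \<epsilon> h" "\<And>h. \<sigma> h 1 = \<epsilon> h"
  "\<And>h h'. (\<Sum>(h1,h2)\<leftarrow>\<Delta> h. \<Sum>(k1,k2)\<leftarrow>\<Delta> h'. sc (\<sigma> h1 k1) (h2 * k2))
           = (\<Sum>(h1,h2)\<leftarrow>\<Delta> h. \<Sum>(k1,k2)\<leftarrow>\<Delta> h'. sc (\<sigma> h2 k2) (k1 * h1))"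
  using cqt unfolding cqt_def by blast+

lemma sig_lin1: "linK (\<lambda>h. \<sigma> h g)" using cqt_unf(1) by (simp add: bilin_def)
lemma sig_lin2: "linK (\<lambda>g. \<sigma> h g)" using cqt_unf(1) by (simp add: bilin_def)

definition D2 :: "'h \<Rightarrow> ('h \<Rightarrow> 'h \<Rightarrow> 'k) \<Rightarrow> 'k" where
  "D2 h F = (\<Sum>(a,b)\<leftarrow>\<Delta> h. F a b)"

lemma lK_comp: "linK f \<Longrightarrow> linHH g \<Longrightarrow> linK (\<lambda>a. f (g a))"
  by (simp add: lin_fun_def linH_def)
lemma lH_comp: "linHH f \<Longrightarrow> linHH g \<Longrightarrow> linHH (\<lambda>a. f (g a))"
  by (simp add: linH_def)

lemma lH_id: "linHH (\<lambda>a. a)" by (simp add: linH_def)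
lemma lH_mulL: "linHH g \<Longrightarrow> linHH (\<lambda>a. g a * c)"
  by (simp add: linH_def distrib_right sc_mult1)
lemma lH_mulR: "linHH g \<Longrightarrow> linHH (\<lambda>a. c * g a)"
  by (simp add: linH_def distrib_left sc_mult2)
lemma lH_S: "linHH g \<Longrightarrow> linHH (\<lambda>a. S (g a))"
  using lH_comp[OF S_lin] .
lemma lH_add: "linHH f \<Longrightarrow> linHH g \<Longrightarrow> linHH (\<lambda>a. f a + g a)"
  by (simp add: linH_def vs.scale_right_distrib)

lemma lK_sig1: "linHH g \<Longrightarrow> linK (\<lambda>a. \<sigma> (g a) c)"
  using lK_comp[OF sig_lin1] .
lemma lK_sig2: "linHH g \<Longrightarrow> linK (\<lambda>a. \<sigma> c (g a))"
  using lK_comp[OF sig_lin2] .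
lemma lK_eps: "linHH g \<Longrightarrow> linK (\<lambda>a. \<epsilon> (g a))"
  using lK_comp[OF eps_lin] .
lemma lK_mulL: "linK f \<Longrightarrow> linK (\<lambda>a. f a * c)"
  by (simp add: lin_fun_def distrib_right)
lemma lK_mulR: "linK f \<Longrightarrow> linK (\<lambda>a. c * f a)"
  by (simp add: lin_fun_def distrib_left mult.left_commute)
lemma lK_add: "linK f \<Longrightarrow> linK g \<Longrightarrow> linK (\<lambda>a. f a + g a)"
  by (simp add: lin_fun_def distrib_left)
lemma lK_sum_list: "(\<And>p. linK (\<lambda>a. F a p)) \<Longrightarrow> linK (\<lambda>a. sum_list (map (F a) L))"
proof (induction L)
  case Nil
  then show ?case by (simp add: lin_fun_def)
next
  case (Cons x L)
  then show ?case using lK_add[of "\<lambda>a. F a x" "\<lambda>a. sum_list (map (F a) L)"] by simp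
qed
lemma lK_sum_list2: "(\<And>p q. linK (\<lambda>a. F a p q)) \<Longrightarrow> linK (\<lambda>a. \<Sum>(p,q)\<leftarrow>L. F a p q)"
  by (rule lK_sum_list) (simp add: split_def)
lemma lK_D2p: "(\<And>p q. linK (\<lambda>a. F a p q)) \<Longrightarrow> linK (\<lambda>a. D2 h (F a))"
  unfolding D2_def by (rule lK_sum_list2)

lemma lK_D2base: assumes "bilK F" shows "linK (\<lambda>h. D2 h F)"
proof -
  have add: "D2 (a + b) F = D2 a F + D2 b F" for a b
    unfolding D2_def by (simp add: teq2_sum[OF hopf_unf(1) assms])
  have scl: "D2 (sc c a) F = c * D2 a F" for c a
  proof -
    have "D2 (sc c a) F = (\<Sum>(x,y)\<leftarrow>map (\<lambda>(x,y). (sc c x, y)) (\<Delta> a). F x y)"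
      unfolding D2_def by (rule teq2_sum[OF hopf_unf(2) assms])
    also have "\<dots> = (\<Sum>(x,y)\<leftarrow>\<Delta> a. c * F x y)"
      by (simp add: comp_def split_def linK_sc[OF bilKD(1)[OF assms]])
    finally show ?thesis by (simp add: D2_def sum_list_mult_left split_def)
  qed
  show ?thesis using add scl by (simp add: lin_fun_def)
qed

lemma lK_D2: "bilK F \<Longrightarrow> linHH g \<Longrightarrow> linK (\<lambda>a. D2 (g a) F)"
  using lK_comp[OF lK_D2base] .

lemmas LI = lH_id lH_mulL lH_mulR lH_S lH_add lK_sig1 lK_sig2 lK_eps lK_mulL lK_mulR lK_add
  lK_D2p lK_D2 bilKI triKI

lemma test1: "bilK (\<lambda>a b. D2 a (\<lambda>u v. \<sigma> (S u * b) v * \<epsilon> c))"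
  by (intro LI)


definition quadK :: "('h \<Rightarrow> 'h \<Rightarrow> 'h \<Rightarrow> 'h \<Rightarrow> 'k) \<Rightarrow> bool" where
  "quadK F \<longleftrightarrow> (\<forall>b c d. linK (\<lambda>a. F a b c d)) \<and> (\<forall>a c d. linK (\<lambda>b. F a b c d))
     \<and> (\<forall>a b d. linK (\<lambda>c. F a b c d)) \<and> (\<forall>a b c. linK (\<lambda>d. F a b c d))"
definition pentK :: "('h \<Rightarrow> 'h \<Rightarrow> 'h \<Rightarrow> 'h \<Rightarrow> 'h \<Rightarrow> 'k) \<Rightarrow> bool" where
  "pentK F \<longleftrightarrow> (\<forall>b c d e. linK (\<lambda>a. F a b c d e)) \<and> (\<forall>a c d e. linK (\<lambda>b. F a b c d e))
     \<and> (\<forall>a b d e. linK (\<lambda>c. F a b c d e)) \<and> (\<forall>a b c e. linK (\<lambda>d. F a b c d e))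
     \<and> (\<forall>a b c d. linK (\<lambda>e. F a b c d e))"
lemma quadKI: "(\<And>b c d. linK (\<lambda>a. F a b c d)) \<Longrightarrow> (\<And>a c d. linK (\<lambda>b. F a b c d)) \<Longrightarrow>
  (\<And>a b d. linK (\<lambda>c. F a b c d)) \<Longrightarrow> (\<And>a b c. linK (\<lambda>d. F a b c d)) \<Longrightarrow> quadK F"
  by (auto simp: quadK_def)
lemma pentKI: "(\<And>b c d e. linK (\<lambda>a. F a b c d e)) \<Longrightarrow> (\<And>a c d e. linK (\<lambda>b. F a b c d e)) \<Longrightarrow>
  (\<And>a b d e. linK (\<lambda>c. F a b c d e)) \<Longrightarrow> (\<And>a b c e. linK (\<lambda>d. F a b c d e)) \<Longrightarrow>
  (\<And>a b c d. linK (\<lambda>e. F a b c d e)) \<Longrightarrow> pentK F"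
  by (auto simp: pentK_def)
lemma quadKD: "quadK F \<Longrightarrow> linK (\<lambda>a. F a b c d)" "quadK F \<Longrightarrow> linK (\<lambda>b. F a b c d)"
  "quadK F \<Longrightarrow> linK (\<lambda>c. F a b c d)" "quadK F \<Longrightarrow> linK (\<lambda>d. F a b c d)"
  by (auto simp: quadK_def)
lemma pentKD: "pentK F \<Longrightarrow> linK (\<lambda>a. F a b c d e)" "pentK F \<Longrightarrow> linK (\<lambda>b. F a b c d e)"
  "pentK F \<Longrightarrow> linK (\<lambda>c. F a b c d e)" "pentK F \<Longrightarrow> linK (\<lambda>d. F a b c d e)"
  "pentK F \<Longrightarrow> linK (\<lambda>e. F a b c d e)"
  by (auto simp: pentK_def)

lemma D2_delta2: "(\<Sum>(a,b,c)\<leftarrow>delta2 \<Delta> h. F a b c) = D2 h (\<lambda>u c. D2 u (\<lambda>a b. F a b c))"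
  unfolding delta2_def D2_def
  by (simp add: sum_list_map_concat comp_def split_def)
lemma D2_delta2': "(\<Sum>(a,b,c)\<leftarrow>delta2' \<Delta> h. F a b c) = D2 h (\<lambda>a u. D2 u (\<lambda>b c. F a b c))"
  unfolding delta2'_def D2_def
  by (simp add: sum_list_map_concat comp_def split_def)

lemma coassoc: assumes "triK F"
  shows "D2 h (\<lambda>u c. D2 u (\<lambda>a b. F a b c)) = D2 h (\<lambda>a u. D2 u (\<lambda>b c. F a b c))"
  using teq3_sum[OF hopf_unf(3) assms, of h] by (simp add: D2_delta2 D2_delta2')

lemma counit1: "linK f \<Longrightarrow> D2 h (\<lambda>a b. \<epsilon> a * f b) = f h"
  using linK_sum_list[of f "\<lambda>(a,b). sc (\<epsilon> a) b" "\<Delta> h"] hopf_unf(5)[of h]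
  by (simp add: D2_def split_def linK_sc)
lemma counit2: "linK f \<Longrightarrow> D2 h (\<lambda>a b. f a * \<epsilon> b) = f h"
  using linK_sum_list[of f "\<lambda>(a,b). sc (\<epsilon> b) a" "\<Delta> h"] hopf_unf(6)[of h]
  by (simp add: D2_def split_def linK_sc mult.commute)

lemma D2_mult: assumes "bilK F"
  shows "D2 (a * b) F = D2 a (\<lambda>a1 a2. D2 b (\<lambda>b1 b2. F (a1 * b1) (a2 * b2)))"
  unfolding D2_def teq2_sum[OF hopf_unf(7) assms]
  by (simp add: sum_list_map_concat comp_def split_def)

lemma D2_one: assumes "bilK F" shows "D2 1 F = F 1 1"
  unfolding D2_def teq2_sum[OF hopf_unf(8) assms] by simp

lemma antip1: "linK f \<Longrightarrow> D2 h (\<lambda>a b. f (S a * b)) = \<epsilon> h * f 1"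
  using linK_sum_list[of f "\<lambda>(a,b). S a * b" "\<Delta> h"] hopf_unf(13)[of h]
  by (simp add: D2_def split_def linK_sc)
lemma antip2: "linK f \<Longrightarrow> D2 h (\<lambda>a b. f (a * S b)) = \<epsilon> h * f 1"
  using linK_sum_list[of f "\<lambda>(a,b). a * S b" "\<Delta> h"] hopf_unf(14)[of h]
  by (simp add: D2_def split_def linK_sc)

definition N3 :: "'h \<Rightarrow> ('h \<Rightarrow> 'h \<Rightarrow> 'h \<Rightarrow> 'k) \<Rightarrow> 'k" where
  "N3 h F = D2 h (\<lambda>u c. D2 u (\<lambda>a b. F a b c))"
definition N4 :: "'h \<Rightarrow> ('h \<Rightarrow> 'h \<Rightarrow> 'h \<Rightarrow> 'h \<Rightarrow> 'k) \<Rightarrow> 'k" where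
  "N4 h F = D2 h (\<lambda>u d. N3 u (\<lambda>a b c. F a b c d))"
definition N5 :: "'h \<Rightarrow> ('h \<Rightarrow> 'h \<Rightarrow> 'h \<Rightarrow> 'h \<Rightarrow> 'h \<Rightarrow> 'k) \<Rightarrow> 'k" where
  "N5 h F = D2 h (\<lambda>u e. N4 u (\<lambda>a b c d. F a b c d e))"

lemma lK_N3p: "(\<And>p q r. linK (\<lambda>a. F a p q r)) \<Longrightarrow> linK (\<lambda>a. N3 h (F a))"
  unfolding N3_def by (intro LI)
lemma lK_N4p: "(\<And>p q r s. linK (\<lambda>a. F a p q r s)) \<Longrightarrow> linK (\<lambda>a. N4 h (F a))"
  unfolding N4_def by (intro LI lK_N3p)
lemma lK_N5p: "(\<And>p q r s t. linK (\<lambda>a. F a p q r s t)) \<Longrightarrow> linK (\<lambda>a. N5 h (F a))"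
  unfolding N5_def by (intro LI lK_N4p)
lemma lK_N3base: "triK F \<Longrightarrow> linK (\<lambda>h. N3 h F)"
  unfolding N3_def by (intro LI lK_D2p) (auto dest: triKD)
lemma lK_N4base: "quadK F \<Longrightarrow> linK (\<lambda>h. N4 h F)"
  unfolding N4_def by (intro LI lK_N3base lK_N3p lK_D2p) (auto dest: quadKD)
lemma lK_N5base: "pentK F \<Longrightarrow> linK (\<lambda>h. N5 h F)"
  unfolding N5_def by (intro LI lK_N4base lK_N4p lK_D2p lK_N3p quadKI) (auto dest: pentKD)
lemma lK_N3: "triK F \<Longrightarrow> linHH g \<Longrightarrow> linK (\<lambda>a. N3 (g a) F)"
  using lK_comp[OF lK_N3base] .
lemma lK_N4: "quadK F \<Longrightarrow> linHH g \<Longrightarrow> linK (\<lambda>a. N4 (g a) F)"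
  using lK_comp[OF lK_N4base] .
lemma lK_N5: "pentK F \<Longrightarrow> linHH g \<Longrightarrow> linK (\<lambda>a. N5 (g a) F)"
  using lK_comp[OF lK_N5base] .

lemmas LI2 = LI lK_N3p lK_N4p lK_N5p lK_N3 lK_N4 lK_N5 quadKI pentKI

end

context HC
begin

lemma D2_swap: "D2 a (\<lambda>x y. D2 b (\<lambda>p q. F x y p q)) = D2 b (\<lambda>p q. D2 a (\<lambda>x y. F x y p q))"
  unfolding D2_def using sum_list_swap[of "\<lambda>x pq. F (fst x) (snd x) (fst pq) (snd pq)" "\<Delta> b" "\<Delta> a"]
  by (simp add: split_def)

lemma D2_cong: "(\<And>a b. F a b = G a b) \<Longrightarrow> D2 h F = D2 h G" by (simp add: D2_def)

lemma N3_D2_swap: "N3 a (\<lambda>x y z. D2 b (\<lambda>p q. F x y z p q)) = D2 b (\<lambda>p q. N3 a (\<lambda>x y z. F x y z p q))"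
proof -
  have "N3 a (\<lambda>x y z. D2 b (\<lambda>p q. F x y z p q)) = D2 a (\<lambda>u z. D2 b (\<lambda>p q. D2 u (\<lambda>x y. F x y z p q)))"
    unfolding N3_def by (rule D2_cong, rule D2_swap)
  also have "\<dots> = D2 b (\<lambda>p q. N3 a (\<lambda>x y z. F x y z p q))"
    unfolding N3_def by (rule D2_swap)
  finally show ?thesis .
qed

lemma sp2_1: "D2 h (\<lambda>a b. D2 a (\<lambda>p q. F p q b)) = N3 h F"
  by (simp add: N3_def)
lemma sp2_2: "triK F \<Longrightarrow> D2 h (\<lambda>a b. D2 b (\<lambda>p q. F a p q)) = N3 h F"
  by (simp add: N3_def coassoc)

lemma sp3_1: "N3 h (\<lambda>a b c. D2 a (\<lambda>p q. F p q b c)) = N4 h F"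
  by (simp add: N3_def N4_def)
lemma sp3_2: assumes "quadK F" shows "N3 h (\<lambda>a b c. D2 b (\<lambda>p q. F a p q c)) = N4 h F"
proof -
  have "\<And>u c. D2 u (\<lambda>a b. D2 b (\<lambda>p q. F a p q c)) = N3 u (\<lambda>a p q. F a p q c)"
    by (rule sp2_2) (intro triKI; rule quadKD[OF assms])
  then show ?thesis by (simp add: N3_def N4_def)
qed
lemma sp3_3: assumes "quadK F" shows "N3 h (\<lambda>a b c. D2 c (\<lambda>p q. F a b p q)) = N4 h F"
proof -
  have "N3 h (\<lambda>a b c. D2 c (\<lambda>p q. F a b p q)) = D2 h (\<lambda>u c. D2 c (\<lambda>p q. D2 u (\<lambda>a b. F a b p q)))"
    unfolding N3_def by (rule D2_cong, rule D2_swap)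
  also have "\<dots> = N3 h (\<lambda>u p q. D2 u (\<lambda>a b. F a b p q))"
    by (rule sp2_2) (intro triKI LI; rule quadKD[OF assms])
  also have "\<dots> = N4 h F" by (simp add: N3_def N4_def)
  finally show ?thesis .
qed

lemma sp4_1: "N4 h (\<lambda>a b c d. D2 a (\<lambda>p q. F p q b c d)) = N5 h F"
  by (simp add: N4_def N5_def sp3_1)
lemma sp4_2: assumes "pentK F" shows "N4 h (\<lambda>a b c d. D2 b (\<lambda>p q. F a p q c d)) = N5 h F"
proof -
  have "\<And>u d. N3 u (\<lambda>a b c. D2 b (\<lambda>p q. F a p q c d)) = N4 u (\<lambda>a p q c. F a p q c d)"
    by (rule sp3_2) (intro quadKI; rule pentKD[OF assms])
  then show ?thesis by (simp add: N4_def N5_def)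
qed
lemma sp4_3: assumes "pentK F" shows "N4 h (\<lambda>a b c d. D2 c (\<lambda>p q. F a b p q d)) = N5 h F"
proof -
  have "\<And>u d. N3 u (\<lambda>a b c. D2 c (\<lambda>p q. F a b p q d)) = N4 u (\<lambda>a b p q. F a b p q d)"
    by (rule sp3_3) (intro quadKI; rule pentKD[OF assms])
  then show ?thesis by (simp add: N4_def N5_def)
qed
lemma sp4_4: assumes "pentK F" shows "N4 h (\<lambda>a b c d. D2 d (\<lambda>p q. F a b c p q)) = N5 h F"
proof -
  have "N4 h (\<lambda>a b c d. D2 d (\<lambda>p q. F a b c p q)) = D2 h (\<lambda>u d. D2 d (\<lambda>p q. N3 u (\<lambda>a b c. F a b c p q)))"
    unfolding N4_def by (rule D2_cong, rule N3_D2_swap)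
  also have "\<dots> = N3 h (\<lambda>u p q. N3 u (\<lambda>a b c. F a b c p q))"
    by (rule sp2_2) (intro triKI LI2; rule pentKD[OF assms])
  also have "\<dots> = N5 h F" by (simp add: N3_def N4_def N5_def)
  finally show ?thesis .
qed

end

context HC
begin

lemma S_1: "S 1 = 1"
proof (rule sepH)
  fix f assume f: "linK f"
  have "D2 1 (\<lambda>a b. f (S a * b)) = \<epsilon> 1 * f 1" by (rule antip1[OF f])
  moreover have "D2 1 (\<lambda>a b. f (S a * b)) = f (S 1 * 1)"
    by (rule D2_one) (intro LI lK_comp[OF f])
  ultimately show "f (S 1) = f 1" by (simp add: eps_1)
qed

lemma eps_S: "\<epsilon> (S h) = \<epsilon> h"
proof -
  have "D2 h (\<lambda>a b. \<epsilon> (S a * b)) = \<epsilon> h * \<epsilon> 1" by (rule antip1[OF eps_lin])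
  moreover have "D2 h (\<lambda>a b. \<epsilon> (S a * b)) = D2 h (\<lambda>a b. \<epsilon> (S a) * \<epsilon> b)"
    by (simp add: eps_mult)
  moreover have "D2 h (\<lambda>a b. \<epsilon> (S a) * \<epsilon> b) = \<epsilon> (S h)"
    by (rule counit2) (intro LI eps_lin)
  ultimately show ?thesis by (simp add: eps_1)
qed

lemma S_mult: "S (a * b) = S b * S a"
proof (rule sepH[symmetric])
  fix f assume f: "linK f"
  note L = LI2 lK_comp[OF f]
  have "f (S b * S a) = D2 a (\<lambda>a1 a2. f (S b * S a1) * \<epsilon> a2)"
    by (rule counit2[of "\<lambda>x. f (S b * S x)", symmetric]) (intro L)
  also have "\<dots> = D2 a (\<lambda>a1 a2. D2 b (\<lambda>b1 b2. f (S b1 * S a1) * \<epsilon> (a2 * b2)))"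
  proof (rule D2_cong)
    fix a1 a2
    have "f (S b * S a1) = D2 b (\<lambda>b1 b2. f (S b1 * S a1) * \<epsilon> b2)"
      by (rule counit2[of "\<lambda>y. f (S y * S a1)", symmetric]) (intro L)
    then show "f (S b * S a1) * \<epsilon> a2 = D2 b (\<lambda>b1 b2. f (S b1 * S a1) * \<epsilon> (a2 * b2))"
      by (simp add: D2_def sum_list_mult_right sum_list_mult_left split_def eps_mult mult_ac)
  qed
  also have "\<dots> = D2 a (\<lambda>a1 a2. D2 b (\<lambda>b1 b2. D2 a2 (\<lambda>p q. D2 b2 (\<lambda>r s. f (S b1 * S a1 * (p * r * S (q * s)))))))"
  proof (intro D2_cong)
    fix a1 a2 b1 b2
    have "D2 (a2 * b2) (\<lambda>c d. f (S b1 * S a1 * (c * S d))) = \<epsilon> (a2 * b2) * f (S b1 * S a1 * 1)"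
      by (rule antip2[of "\<lambda>t. f (S b1 * S a1 * t)"]) (intro L)
    moreover have "D2 (a2 * b2) (\<lambda>c d. f (S b1 * S a1 * (c * S d))) = D2 a2 (\<lambda>p q. D2 b2 (\<lambda>r s. f (S b1 * S a1 * (p * r * S (q * s)))))"
      by (rule D2_mult) (intro L)
    ultimately show "f (S b1 * S a1) * \<epsilon> (a2 * b2) = D2 a2 (\<lambda>p q. D2 b2 (\<lambda>r s. f (S b1 * S a1 * (p * r * S (q * s)))))"
      by (simp add: mult.commute)
  qed
  also have "\<dots> = D2 a (\<lambda>a1 a2. D2 a2 (\<lambda>p q. D2 b (\<lambda>b1 b2. D2 b2 (\<lambda>r s. f (S b1 * S a1 * (p * r * S (q * s)))))))"
    by (rule D2_cong, rule D2_swap)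
  also have "\<dots> = N3 a (\<lambda>a1 p q. D2 b (\<lambda>b1 b2. D2 b2 (\<lambda>r s. f (S b1 * S a1 * (p * r * S (q * s))))))"
    by (rule sp2_2) (intro L)
  also have "\<dots> = N3 a (\<lambda>a1 p q. N3 b (\<lambda>b1 r s. f (S b1 * (S a1 * p) * r * S (q * s))))"
  proof -
    have "\<And>a1 p q. D2 b (\<lambda>b1 b2. D2 b2 (\<lambda>r s. f (S b1 * S a1 * (p * r * S (q * s)))))
        = N3 b (\<lambda>b1 r s. f (S b1 * (S a1 * p) * r * S (q * s)))"
      by (simp only: mult.assoc, rule sp2_2) (intro L)
    then show ?thesis by simp
  qed
  also have "\<dots> = D2 a (\<lambda>u q. \<epsilon> u * N3 b (\<lambda>b1 r s. f (S b1 * 1 * r * S (q * s))))"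
    unfolding N3_def[of a]
  proof (rule D2_cong)
    fix u q
    show "D2 u (\<lambda>a1 p. N3 b (\<lambda>b1 r s. f (S b1 * (S a1 * p) * r * S (q * s))))
        = \<epsilon> u * N3 b (\<lambda>b1 r s. f (S b1 * 1 * r * S (q * s)))"
      by (rule antip1[of "\<lambda>t. N3 b (\<lambda>b1 r s. f (S b1 * t * r * S (q * s)))"]) (intro L)
  qed
  also have "\<dots> = N3 b (\<lambda>b1 r s. f (S b1 * r * S (a * s)))"
    by (subst counit1[of "\<lambda>q. N3 b (\<lambda>b1 r s. f (S b1 * 1 * r * S (q * s)))"]) (intro L, simp)
  also have "\<dots> = D2 b (\<lambda>u s. \<epsilon> u * f (S (a * s)))"
    unfolding N3_def[of b]
  proof (rule D2_cong)
    fix u s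
    show "D2 u (\<lambda>b1 r. f (S b1 * r * S (a * s))) = \<epsilon> u * f (S (a * s))"
      using antip1[of "\<lambda>t. f (t * S (a * s))" u] by (simp add: L)
  qed
  also have "\<dots> = f (S (a * b))"
    by (rule counit1[of "\<lambda>s. f (S (a * s))"]) (intro L)
  finally show "f (S b * S a) = f (S (a * b))" .
qed


lemma N4_D2_swap: "N4 a (\<lambda>x y z w. D2 b (\<lambda>p q. F x y z w p q)) = D2 b (\<lambda>p q. N4 a (\<lambda>x y z w. F x y z w p q))"
proof -
  have "N4 a (\<lambda>x y z w. D2 b (\<lambda>p q. F x y z w p q)) = D2 a (\<lambda>u d. D2 b (\<lambda>p q. N3 u (\<lambda>x y z. F x y z d p q)))"
    unfolding N4_def by (rule D2_cong, rule N3_D2_swap)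
  also have "\<dots> = D2 b (\<lambda>p q. N4 a (\<lambda>x y z w. F x y z w p q))"
    unfolding N4_def by (rule D2_swap)
  finally show ?thesis .
qed

lemma fs3: assumes "quadK G" shows "D2 h (\<lambda>a b. N3 b (G a)) = N4 h G"
proof -
  have "D2 h (\<lambda>a b. N3 b (G a)) = D2 h (\<lambda>a b. D2 b (\<lambda>u z. D2 u (\<lambda>x y. G a x y z)))"
    by (simp add: N3_def)
  also have "\<dots> = N3 h (\<lambda>a u z. D2 u (\<lambda>x y. G a x y z))"
    by (rule sp2_2) (intro LI2; rule quadKD[OF assms])
  also have "\<dots> = N4 h G" by (rule sp3_2[OF assms])
  finally show ?thesis .
qed

lemma fs4: assumes "pentK G" shows "D2 h (\<lambda>a b. N4 b (G a)) = N5 h G"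
proof -
  have "D2 h (\<lambda>a b. N4 b (G a)) = D2 h (\<lambda>a b. D2 b (\<lambda>u e. N3 u (\<lambda>x y z. G a x y z e)))"
    by (simp add: N4_def)
  also have "\<dots> = N3 h (\<lambda>a u e. N3 u (\<lambda>x y z. G a x y z e))"
    by (rule sp2_2) (intro LI2; rule pentKD[OF assms])
  also have "\<dots> = N3 h (\<lambda>a u e. D2 u (\<lambda>v z. D2 v (\<lambda>x y. G a x y z e)))"
    by (simp add: N3_def)
  also have "\<dots> = N4 h (\<lambda>a v z e. D2 v (\<lambda>x y. G a x y z e))"
    by (rule sp3_2) (intro LI2; rule pentKD[OF assms])
  also have "\<dots> = N5 h G" by (rule sp4_2[OF assms])
  finally show ?thesis .
qed

lemma contr3_1: "bilK G \<Longrightarrow> N3 h (\<lambda>a b c. \<epsilon> a * G b c) = D2 h G"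
  unfolding N3_def by (rule D2_cong, rule counit1) (auto dest: bilKD)
lemma contr3_2: "bilK G \<Longrightarrow> N3 h (\<lambda>a b c. \<epsilon> b * G a c) = D2 h G"
  by (subst sp2_2[symmetric]) (auto intro!: LI2 dest: bilKD intro: D2_cong counit1)
lemma contr3_3: "bilK G \<Longrightarrow> N3 h (\<lambda>a b c. G a b * \<epsilon> c) = D2 h G"
proof -
  assume G: "bilK G"
  have "N3 h (\<lambda>a b c. G a b * \<epsilon> c) = D2 h (\<lambda>u c. D2 u G * \<epsilon> c)"
    unfolding N3_def by (simp add: D2_def sum_list_mult_right split_def)
  also have "\<dots> = D2 h G" by (rule counit2[of "\<lambda>u. D2 u G"]) (rule lK_D2base[OF G])
  finally show ?thesis .
qed

lemma eps4: assumes G: "bilK G"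
  shows "N4 c (\<lambda>c1 c2 c3 c4. G (c1 * S c4) (c2 * S c3)) = \<epsilon> c * G 1 1"
proof -
  note L = LI2 bilKD[OF G] lK_comp[OF bilKD(1)[OF G]] lK_comp[OF bilKD(2)[OF G]]
  have "N4 c (\<lambda>c1 c2 c3 c4. G (c1 * S c4) (c2 * S c3)) = N3 c (\<lambda>c1 w c4. D2 w (\<lambda>c2 c3. G (c1 * S c4) (c2 * S c3)))"
    by (rule sp3_2[symmetric]) (intro L)
  also have "\<dots> = N3 c (\<lambda>c1 w c4. \<epsilon> w * G (c1 * S c4) 1)"
    unfolding N3_def by (intro D2_cong antip2[of "\<lambda>t. G (_ * S _) t"] L)
  also have "\<dots> = D2 c (\<lambda>c1 c4. G (c1 * S c4) 1)"
    by (rule contr3_2) (intro L)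
  also have "\<dots> = \<epsilon> c * G 1 1"
    using antip2[of "\<lambda>t. G t 1" c] by (simp add: L)
  finally show ?thesis .
qed

lemma D2_S: assumes F: "bilK F" shows "D2 (S h) F = D2 h (\<lambda>a b. F (S b) (S a))"
proof -
  note L = LI2 bilKD[OF F] lK_comp[OF bilKD(1)[OF F]] lK_comp[OF bilKD(2)[OF F]] lK_D2[OF F]
  have "D2 (S h) F = D2 h (\<lambda>h1 h2. D2 (S h1) F * \<epsilon> h2)"
    by (rule counit2[of "\<lambda>x. D2 (S x) F", symmetric]) (intro L)
  also have "\<dots> = D2 h (\<lambda>h1 h2. D2 (S h1) (\<lambda>p q. N4 h2 (\<lambda>c1 c2 c3 c4. F (p * (c1 * S c4)) (q * (c2 * S c3)))))"
  proof (rule D2_cong)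
    fix h1 h2
    have "\<And>p q. N4 h2 (\<lambda>c1 c2 c3 c4. F (p * (c1 * S c4)) (q * (c2 * S c3))) = \<epsilon> h2 * F (p * 1) (q * 1)"
      by (rule eps4) (intro L)
    then show "D2 (S h1) F * \<epsilon> h2 = D2 (S h1) (\<lambda>p q. N4 h2 (\<lambda>c1 c2 c3 c4. F (p * (c1 * S c4)) (q * (c2 * S c3))))"
      by (simp add: D2_def sum_list_mult_right sum_list_mult_left split_def mult.commute)
  qed
  also have "\<dots> = D2 h (\<lambda>h1 h2. N4 h2 (\<lambda>c1 c2 c3 c4. D2 (S h1) (\<lambda>p q. F (p * c1 * S c4) (q * c2 * S c3))))"
    by (rule D2_cong, subst N4_D2_swap[symmetric]) (simp add: mult.assoc)
  also have "\<dots> = N5 h (\<lambda>h1 c1 c2 c3 c4. D2 (S h1) (\<lambda>p q. F (p * c1 * S c4) (q * c2 * S c3)))"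
    by (rule fs4) (intro L)
  also have "\<dots> = N4 h (\<lambda>h1 w c3 c4. D2 w (\<lambda>c1 c2. D2 (S h1) (\<lambda>p q. F (p * c1 * S c4) (q * c2 * S c3))))"
    by (rule sp4_2[symmetric]) (intro L)
  also have "\<dots> = N4 h (\<lambda>h1 w c3 c4. D2 (S h1 * w) (\<lambda>u v. F (u * S c4) (v * S c3)))"
    unfolding N4_def N3_def
  proof (intro D2_cong)
    fix h1 w c3 c4
    have "D2 w (\<lambda>c1 c2. D2 (S h1) (\<lambda>p q. F (p * c1 * S c4) (q * c2 * S c3)))
        = D2 (S h1) (\<lambda>p q. D2 w (\<lambda>c1 c2. F (p * c1 * S c4) (q * c2 * S c3)))" by (rule D2_swap)
    also have "\<dots> = D2 (S h1 * w) (\<lambda>u v. F (u * S c4) (v * S c3))"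
      by (rule D2_mult[symmetric]) (intro L)
    finally show "D2 w (\<lambda>c1 c2. D2 (S h1) (\<lambda>p q. F (p * c1 * S c4) (q * c2 * S c3))) = D2 (S h1 * w) (\<lambda>u v. F (u * S c4) (v * S c3))" .
  qed
  also have "\<dots> = N3 h (\<lambda>z c3 c4. D2 z (\<lambda>h1 w. D2 (S h1 * w) (\<lambda>u v. F (u * S c4) (v * S c3))))"
    by (rule sp3_1[symmetric])
  also have "\<dots> = N3 h (\<lambda>z c3 c4. \<epsilon> z * F (S c4) (S c3))"
    unfolding N3_def
  proof (intro D2_cong)
    fix z c3 c4
    have "D2 z (\<lambda>h1 w. D2 (S h1 * w) (\<lambda>u v. F (u * S c4) (v * S c3))) = \<epsilon> z * D2 1 (\<lambda>u v. F (u * S c4) (v * S c3))"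
      by (rule antip1[of "\<lambda>t. D2 t (\<lambda>u v. F (u * S c4) (v * S c3))"]) (intro L)
    also have "D2 1 (\<lambda>u v. F (u * S c4) (v * S c3)) = F (S c4) (S c3)"
      by (subst D2_one) (intro L, simp)
    finally show "D2 z (\<lambda>h1 w. D2 (S h1 * w) (\<lambda>u v. F (u * S c4) (v * S c3))) = \<epsilon> z * F (S c4) (S c3)" .
  qed
  also have "\<dots> = D2 h (\<lambda>a b. F (S b) (S a))"
    by (rule contr3_1) (intro L)
  finally show ?thesis .
qed

end

context HC
begin

abbreviation Si :: "'h \<Rightarrow> 'h" where "Si \<equiv> inv S"

lemma S_inj: "inj S" using Sbij bij_def by auto
lemma Si_S[simp]: "Si (S x) = x" using S_inj by (simp add: inv_f_f)
lemma S_Si[simp]: "S (Si x) = x" using Sbij by (simp add: bij_def surj_f_inv_f)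
lemma S_eq_iff: "S a = S b \<longleftrightarrow> a = b" using S_inj by (auto dest: injD)

lemma Si_add: "Si (a + b) = Si a + Si b"
  using hopf_unf(11)[of "Si a" "Si b"] S_eq_iff by (metis S_Si)
lemma Si_sc: "Si (sc c a) = sc c (Si a)"
  using hopf_unf(12)[of c "Si a"] S_eq_iff by (metis S_Si)
lemma Si_lin: "linHH Si" by (simp add: linH_def Si_add Si_sc)
lemma lH_Si: "linHH g \<Longrightarrow> linHH (\<lambda>a. Si (g a))" using lH_comp[OF Si_lin] .

lemmas LI3 = LI2 lH_Si

lemma Si_mult: "Si (a * b) = Si b * Si a"
  by (metis S_Si S_mult Si_S)
lemma Si_1: "Si 1 = 1" by (metis S_1 Si_S)
lemma eps_Si: "\<epsilon> (Si h) = \<epsilon> h" by (metis S_Si eps_S)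

lemma D2_Si: assumes F: "bilK F" shows "D2 (Si h) F = D2 h (\<lambda>a b. F (Si b) (Si a))"
proof -
  have G: "bilK (\<lambda>a b. F (Si b) (Si a))"
    by (intro LI3 lK_comp[OF bilKD(1)[OF F]] lK_comp[OF bilKD(2)[OF F]])
  have "D2 (S (Si h)) (\<lambda>a b. F (Si b) (Si a)) = D2 (Si h) (\<lambda>a b. F (Si (S a)) (Si (S b)))"
    by (rule D2_S[OF G])
  then show ?thesis by simp
qed

lemma antipSi1: "linK f \<Longrightarrow> D2 h (\<lambda>a b. f (Si b * a)) = \<epsilon> h * f 1"
proof -
  assume f: "linK f"
  have "D2 h (\<lambda>a b. f (Si (S a * b))) = \<epsilon> h * f (Si 1)"
    by (rule antip1) (intro LI3 lK_comp[OF f])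
  then show ?thesis by (simp add: Si_mult Si_1)
qed
lemma antipSi2: "linK f \<Longrightarrow> D2 h (\<lambda>a b. f (b * Si a)) = \<epsilon> h * f 1"
proof -
  assume f: "linK f"
  have "D2 h (\<lambda>a b. f (Si (a * S b))) = \<epsilon> h * f (Si 1)"
    by (rule antip2) (intro LI3 lK_comp[OF f])
  then show ?thesis by (simp add: Si_mult Si_1)
qed

lemma sig_m1: "\<sigma> (h * h') g = D2 g (\<lambda>g1 g2. \<sigma> h g1 * \<sigma> h' g2)"
  using cqt_unf(2) by (simp add: D2_def)
lemma sig_m2: "\<sigma> g (h * h') = D2 g (\<lambda>g1 g2. \<sigma> g2 h * \<sigma> g1 h')"
  using cqt_unf(3) by (simp add: D2_def)
lemma sig_1l: "\<sigma> 1 h = \<epsilon> h" using cqt_unf(4) by simp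
lemma sig_1r: "\<sigma> h 1 = \<epsilon> h" using cqt_unf(5) by simp

lemma cqtK: assumes f: "linK f"
  shows "D2 h (\<lambda>h1 h2. D2 k (\<lambda>k1 k2. \<sigma> h1 k1 * f (h2 * k2))) = D2 h (\<lambda>h1 h2. D2 k (\<lambda>k1 k2. \<sigma> h2 k2 * f (k1 * h1)))"
proof -
  have "f (\<Sum>(h1,h2)\<leftarrow>\<Delta> h. \<Sum>(k1,k2)\<leftarrow>\<Delta> k. sc (\<sigma> h1 k1) (h2 * k2))
      = f (\<Sum>(h1,h2)\<leftarrow>\<Delta> h. \<Sum>(k1,k2)\<leftarrow>\<Delta> k. sc (\<sigma> h2 k2) (k1 * h1))"
    using cqt_unf(6) by simp
  then show ?thesis
    by (simp add: D2_def linK_sum_list[OF f] linK_sc[OF f] split_def)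
qed

end

context HC
begin

lemma psi_sum2: "linK \<psi> \<Longrightarrow> \<psi> (\<Sum>(a,b)\<leftarrow>L. F a b) = (\<Sum>(a,b)\<leftarrow>L. \<psi> (F a b))"
  by (simp add: linK_sum_list split_def)
lemma psi_sum3: "linK \<psi> \<Longrightarrow> \<psi> (\<Sum>(a,b,c)\<leftarrow>L. F a b c) = (\<Sum>(a,b,c)\<leftarrow>L. \<psi> (F a b c))"
  by (simp add: linK_sum_list split_def)
lemma sum_delta2_N3: "(\<Sum>(a,b,c)\<leftarrow>delta2 \<Delta> h. F a b c) = N3 h F"
  by (simp add: D2_delta2 N3_def)

abbreviation th where "th \<equiv> theta sc \<Delta> \<sigma> S"

lemma theta_psi: "linK \<psi> \<Longrightarrow> \<psi> (th x h) = D2 x (\<lambda>x1 x2. \<sigma> h (Si (Si x2)) * \<psi> x1)"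
  by (simp add: theta_def evD_def thetaL_def lmap_def linK_sum_list linK_sc D2_def split_def comp_def)

lemma theta_add: "th (x + y) h = th x h + th y h"
proof (rule sepH)
  fix \<psi> assume p: "linK \<psi>"
  have l: "linK (\<lambda>x. D2 x (\<lambda>x1 x2. \<sigma> h (Si (Si x2)) * \<psi> x1))"
    by (intro LI3 lK_D2base p)
  show "\<psi> (th (x + y) h) = \<psi> (th x h + th y h)"
    by (simp add: theta_psi[OF p] linK_add[OF p] linK_add[OF l])
qed

lemma theta_sc: "th (sc c x) h = sc c (th x h)"
proof (rule sepH)
  fix \<psi> assume p: "linK \<psi>"
  have l: "linK (\<lambda>x. D2 x (\<lambda>x1 x2. \<sigma> h (Si (Si x2)) * \<psi> x1))"
    by (intro LI3 lK_D2base p)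
  show "\<psi> (th (sc c x) h) = \<psi> (sc c (th x h))"
    by (simp add: theta_psi[OF p] linK_sc[OF p] linK_sc[OF l])
qed

lemma theta_1: "th x 1 = x"
proof (rule sepH)
  fix \<psi> assume p: "linK \<psi>"
  have "D2 x (\<lambda>x1 x2. \<sigma> 1 (Si (Si x2)) * \<psi> x1) = D2 x (\<lambda>x1 x2. \<psi> x1 * \<epsilon> x2)"
    by (simp add: sig_1l eps_Si mult.commute)
  also have "\<dots> = \<psi> x" by (rule counit2[OF p])
  finally show "\<psi> (th x 1) = \<psi> x" by (simp add: theta_psi[OF p])
qed

lemma theta_inj: "inj_on th X"
  by (rule inj_onI) (metis theta_1)

lemma D2_SiSi: "bilK F \<Longrightarrow> D2 (Si (Si h)) F = D2 h (\<lambda>a b. F (Si (Si a)) (Si (Si b)))"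
proof -
  assume F: "bilK F"
  have G: "bilK (\<lambda>a b. F (Si b) (Si a))"
    by (intro LI3 lK_comp[OF bilKD(1)[OF F]] lK_comp[OF bilKD(2)[OF F]])
  show ?thesis by (simp add: D2_Si[OF F] D2_Si[OF G])
qed

lemma claim6: "coactB sc \<Delta> \<sigma> S (thetaL \<Delta> \<sigma> (inv S) y) h h'
          = (\<Sum>(y1,y2,y3)\<leftarrow>delta2 \<Delta> y. sc (\<sigma> h (inv S y1 * inv S (inv S y3))) (th y2 h'))"
proof (rule sepH)
  fix \<psi> assume p: "linK \<psi>"
  note L = LI3 p lK_comp[OF p]
  have "\<psi> (coactB sc \<Delta> \<sigma> S (thetaL \<Delta> \<sigma> (inv S) y) h h')
      = N3 y (\<lambda>x1 x2 v. D2 h (\<lambda>h1 h2. \<sigma> (h' * h1) (Si (Si v)) * \<sigma> h2 (Si x1) * \<psi> x2))"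
    by (simp add: coactB_def thetaL_def lmap_def linK_sum_list[OF p] linK_sc[OF p] N3_def D2_def split_def comp_def)
  also have "\<dots> = N3 y (\<lambda>x1 x2 v. D2 v (\<lambda>p q. \<sigma> h' (Si (Si p)) * \<sigma> h (Si x1 * Si (Si q)) * \<psi> x2))"
    unfolding N3_def
  proof (intro D2_cong)
    fix x1 x2 v
    have "D2 h (\<lambda>h1 h2. \<sigma> (h' * h1) (Si (Si v)) * \<sigma> h2 (Si x1) * \<psi> x2)
        = D2 h (\<lambda>h1 h2. D2 v (\<lambda>p q. \<sigma> h' (Si (Si p)) * \<sigma> h1 (Si (Si q))) * \<sigma> h2 (Si x1) * \<psi> x2)"
      apply (rule D2_cong)
      apply (simp only: sig_m1)
      apply (subst D2_SiSi)
       apply (intro L)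
      apply (rule refl)
      done
    also have "\<dots> = D2 v (\<lambda>p q. \<sigma> h' (Si (Si p)) * D2 h (\<lambda>h1 h2. \<sigma> h2 (Si x1) * \<sigma> h1 (Si (Si q))) * \<psi> x2)"
      by (simp add: D2_def sum_list_mult_right sum_list_mult_left split_def sum_list_swap[of _ "\<Delta> h"] mult_ac)
    also have "\<dots> = D2 v (\<lambda>p q. \<sigma> h' (Si (Si p)) * \<sigma> h (Si x1 * Si (Si q)) * \<psi> x2)"
      by (simp add: sig_m2)
    finally show "D2 h (\<lambda>h1 h2. \<sigma> (h' * h1) (Si (Si v)) * \<sigma> h2 (Si x1) * \<psi> x2) = D2 v (\<lambda>p q. \<sigma> h' (Si (Si p)) * \<sigma> h (Si x1 * Si (Si q)) * \<psi> x2)" .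
  qed
  also have "\<dots> = N4 y (\<lambda>x1 x2 p q. \<sigma> h' (Si (Si p)) * \<sigma> h (Si x1 * Si (Si q)) * \<psi> x2)"
    by (rule sp3_3) (intro L)
  also have "\<dots> = N4 y (\<lambda>y1 a b y3. \<sigma> h (Si y1 * Si (Si y3)) * (\<sigma> h' (Si (Si b)) * \<psi> a))"
    by (simp add: mult_ac)
  also have "\<dots> = N3 y (\<lambda>y1 y2 y3. D2 y2 (\<lambda>a b. \<sigma> h (Si y1 * Si (Si y3)) * (\<sigma> h' (Si (Si b)) * \<psi> a)))"
    by (rule sp3_2[symmetric]) (intro L)
  also have "\<dots> = \<psi> (\<Sum>(y1,y2,y3)\<leftarrow>delta2 \<Delta> y. sc (\<sigma> h (inv S y1 * inv S (inv S y3))) (th y2 h'))"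
    unfolding psi_sum3[OF p] linK_sc[OF p] theta_psi[OF p] sum_delta2_N3
    by (simp add: D2_def sum_list_mult_left split_def)
  finally show "\<psi> (coactB sc \<Delta> \<sigma> S (thetaL \<Delta> \<sigma> (inv S) y) h h') = \<psi> (\<Sum>(y1,y2,y3)\<leftarrow>delta2 \<Delta> y. sc (\<sigma> h (inv S y1 * inv S (inv S y3))) (th y2 h'))" .
qed

end

context HC
begin

abbreviation act where "act \<equiv> actX sc \<Delta> S"
abbreviation coact where "coact \<equiv> coactX sc \<Delta> \<sigma> S"

lemma act_psi: assumes "linK \<chi>" shows "\<chi> (act \<phi> y) = N3 y (\<lambda>a b c. \<phi> (Si a * Si (Si c)) * \<chi> b)"
  unfolding actX_def psi_sum3[OF assms] linK_sc[OF assms] sum_delta2_N3 by simp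

lemma coact_act: "coact y h = act (\<sigma> h) y"
  by (simp add: coactX_def actX_def)

lemma act_add: assumes "linK \<phi>" shows "act \<phi> (y + z) = act \<phi> y + act \<phi> z"
proof (rule sepH)
  fix \<chi> assume c: "linK \<chi>"
  have l: "linK (\<lambda>y. N3 y (\<lambda>a b c. \<phi> (Si a * Si (Si c)) * \<chi> b))"
    by (intro LI3 lK_N3base c lK_comp[OF assms])
  show "\<chi> (act \<phi> (y + z)) = \<chi> (act \<phi> y + act \<phi> z)"
    by (simp add: act_psi[OF c] linK_add[OF c] linK_add[OF l])
qed

lemma act_sc: assumes "linK \<phi>" shows "act \<phi> (sc k y) = sc k (act \<phi> y)"
proof (rule sepH)
  fix \<chi> assume c: "linK \<chi>"
  have l: "linK (\<lambda>y. N3 y (\<lambda>a b c. \<phi> (Si a * Si (Si c)) * \<chi> b))"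
    by (intro LI3 lK_N3base c lK_comp[OF assms])
  show "\<chi> (act \<phi> (sc k y)) = \<chi> (sc k (act \<phi> y))"
    by (simp add: act_psi[OF c] linK_sc[OF c] linK_sc[OF l])
qed

lemma act_plus_fun: "act (\<lambda>h. \<phi> h + \<psi> h) y = act \<phi> y + act \<psi> y"
proof (rule sepH)
  fix \<chi> assume c: "linK \<chi>"
  have "N3 y (\<lambda>a b c. (\<phi> (Si a * Si (Si c)) + \<psi> (Si a * Si (Si c))) * \<chi> b)
      = N3 y (\<lambda>a b c. \<phi> (Si a * Si (Si c)) * \<chi> b) + N3 y (\<lambda>a b c. \<psi> (Si a * Si (Si c)) * \<chi> b)"
    by (simp add: N3_def D2_def distrib_right sum_list_addf split_def)
  then show "\<chi> (act (\<lambda>h. \<phi> h + \<psi> h) y) = \<chi> (act \<phi> y + act \<psi> y)"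
    by (simp add: act_psi[OF c] linK_add[OF c])
qed

lemma act_scal_fun: "act (\<lambda>h. k * \<phi> h) y = sc k (act \<phi> y)"
proof (rule sepH)
  fix \<chi> assume c: "linK \<chi>"
  have "N3 y (\<lambda>a b c. (k * \<phi> (Si a * Si (Si c))) * \<chi> b) = k * N3 y (\<lambda>a b c. \<phi> (Si a * Si (Si c)) * \<chi> b)"
    by (simp add: N3_def D2_def sum_list_mult_left split_def mult.assoc)
  then show "\<chi> (act (\<lambda>h. k * \<phi> h) y) = \<chi> (sc k (act \<phi> y))"
    by (simp add: act_psi[OF c] linK_sc[OF c])
qed

lemma act_eps: "act \<epsilon> y = y"
proof (rule sepH)
  fix \<chi> assume c: "linK \<chi>"
  have "N3 y (\<lambda>a b c. \<epsilon> (Si a * Si (Si c)) * \<chi> b) = N3 y (\<lambda>a b c. \<epsilon> a * (\<chi> b * \<epsilon> c))"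
    by (simp add: eps_mult eps_Si mult_ac)
  also have "\<dots> = D2 y (\<lambda>b c. \<chi> b * \<epsilon> c)" by (rule contr3_1) (intro LI3 c)
  also have "\<dots> = \<chi> y" by (rule counit2[OF c])
  finally show "\<chi> (act \<epsilon> y) = \<chi> y" by (simp add: act_psi[OF c])
qed

lemma N3_mid3: assumes "pentK F" shows "N3 h (\<lambda>a b c. N3 b (\<lambda>x y z. F a x y z c)) = N5 h F"
proof -
  have "N3 h (\<lambda>a b c. N3 b (\<lambda>x y z. F a x y z c)) = N3 h (\<lambda>a b c. D2 b (\<lambda>u z. D2 u (\<lambda>x y. F a x y z c)))"
    by (simp add: N3_def[of b for b])
  also have "\<dots> = N4 h (\<lambda>a u z c. D2 u (\<lambda>x y. F a x y z c))"
    by (rule sp3_2) (intro LI3; rule pentKD[OF assms])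
  also have "\<dots> = N5 h F" by (rule sp4_2[OF assms])
  finally show ?thesis .
qed

lemma K_split: assumes G: "triK G"
  shows "N3 y (\<lambda>a b c. D2 (Si a * Si (Si c)) (\<lambda>k1 k2. G k1 b k2))
       = N5 y (\<lambda>p q b r s. G (Si q * Si (Si r)) b (Si p * Si (Si s)))"
proof -
  note L = LI3 triKD[OF G] lK_comp[OF triKD(1)[OF G]] lK_comp[OF triKD(2)[OF G]] lK_comp[OF triKD(3)[OF G]]
  have "\<And>a b c. D2 (Si a * Si (Si c)) (\<lambda>k1 k2. G k1 b k2) = D2 a (\<lambda>p q. D2 c (\<lambda>r s. G (Si q * Si (Si r)) b (Si p * Si (Si s))))"
  proof -
    fix a b c
    have "D2 (Si a * Si (Si c)) (\<lambda>k1 k2. G k1 b k2) = D2 (Si a) (\<lambda>a1 a2. D2 (Si (Si c)) (\<lambda>b1 b2. G (a1 * b1) b (a2 * b2)))"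
      by (rule D2_mult) (intro L)
    also have "\<dots> = D2 a (\<lambda>p q. D2 (Si (Si c)) (\<lambda>b1 b2. G (Si q * b1) b (Si p * b2)))"
      by (rule D2_Si) (intro L)
    also have "\<dots> = D2 a (\<lambda>p q. D2 c (\<lambda>r s. G (Si q * Si (Si r)) b (Si p * Si (Si s))))"
      by (rule D2_cong, rule D2_SiSi) (intro L)
    finally show "D2 (Si a * Si (Si c)) (\<lambda>k1 k2. G k1 b k2) = D2 a (\<lambda>p q. D2 c (\<lambda>r s. G (Si q * Si (Si r)) b (Si p * Si (Si s))))" .
  qed
  then have "N3 y (\<lambda>a b c. D2 (Si a * Si (Si c)) (\<lambda>k1 k2. G k1 b k2))
      = N3 y (\<lambda>a b c. D2 a (\<lambda>p q. D2 c (\<lambda>r s. G (Si q * Si (Si r)) b (Si p * Si (Si s)))))" by simp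
  also have "\<dots> = N4 y (\<lambda>p q b c. D2 c (\<lambda>r s. G (Si q * Si (Si r)) b (Si p * Si (Si s))))"
    by (rule sp3_1)
  also have "\<dots> = N5 y (\<lambda>p q b r s. G (Si q * Si (Si r)) b (Si p * Si (Si s)))"
    by (rule sp4_4) (intro L)
  finally show ?thesis .
qed

lemma act_conv: assumes f: "linK \<phi>" and g: "linK \<psi>"
  shows "act (conv \<Delta> \<phi> \<psi>) y = act \<phi> (act \<psi> y)"
proof (rule sepH)
  fix \<chi> assume c: "linK \<chi>"
  note L = LI3 c f g lK_comp[OF f] lK_comp[OF g]
  have l: "linK (\<lambda>y. N3 y (\<lambda>a b c. \<phi> (Si a * Si (Si c)) * \<chi> b))"
    by (intro L)
  have "\<chi> (act (conv \<Delta> \<phi> \<psi>) y) = N3 y (\<lambda>a b c. D2 (Si a * Si (Si c)) (\<lambda>k1 k2. \<phi> k1 * \<psi> k2 * \<chi> b))"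
    by (simp add: act_psi[OF c] conv_def D2_def sum_list_mult_right split_def)
  also have "\<dots> = N5 y (\<lambda>p q b r s. \<phi> (Si q * Si (Si r)) * \<psi> (Si p * Si (Si s)) * \<chi> b)"
    by (rule K_split) (intro L)
  also have "\<dots> = N5 y (\<lambda>a x y z c. \<psi> (Si a * Si (Si c)) * (\<phi> (Si x * Si (Si z)) * \<chi> y))"
    by (simp add: mult_ac)
  also have "\<dots> = N3 y (\<lambda>a b c. N3 b (\<lambda>x y z. \<psi> (Si a * Si (Si c)) * (\<phi> (Si x * Si (Si z)) * \<chi> y)))"
    by (rule N3_mid3[symmetric]) (intro L)
  also have "\<dots> = N3 y (\<lambda>a b c. \<psi> (Si a * Si (Si c)) * N3 b (\<lambda>x y z. \<phi> (Si x * Si (Si z)) * \<chi> y))"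
    by (simp add: N3_def D2_def sum_list_mult_left split_def)
  also have "\<dots> = \<chi> (act \<phi> (act \<psi> y))"
    by (simp add: act_psi[OF c] act_psi[OF l])
  finally show "\<chi> (act (conv \<Delta> \<phi> \<psi>) y) = \<chi> (act \<phi> (act \<psi> y))" .
qed

end

context HC
begin

lemma subX_unf: "0 \<in> X" "\<And>a b. a \<in> X \<Longrightarrow> b \<in> X \<Longrightarrow> a + b \<in> X" "\<And>c a. a \<in> X \<Longrightarrow> sc c a \<in> X"
  "1 \<in> X" "\<And>a b. a \<in> X \<Longrightarrow> b \<in> X \<Longrightarrow> a * b \<in> X"
  "\<And>x. x \<in> X \<Longrightarrow> \<exists>L. set L \<subseteq> X \<times> X \<and> teq2 sc L (\<Delta> x)" "S ` X = X"
  using subX unfolding sub_hopf_def by blast+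

lemma oneA: "1 \<in> A" using subA unfolding sub_hopf_def by blast

lemma Si_X: "x \<in> X \<Longrightarrow> Si x \<in> X"
  using subX_unf(7) by (metis Si_S imageE)

lemma sum_list_X: "(\<And>x. x \<in> set L \<Longrightarrow> f x \<in> X) \<Longrightarrow> sum_list (map f L) \<in> X"
  by (induction L) (auto intro: subX_unf)

lemma D2X: assumes "y \<in> X" obtains L where "set L \<subseteq> X \<times> X" "\<And>F. bilK F \<Longrightarrow> D2 y F = (\<Sum>(a,b)\<leftarrow>L. F a b)"
proof -
  obtain L where L: "set L \<subseteq> X \<times> X" "teq2 sc L (\<Delta> y)" using subX_unf(6)[OF assms] by blast
  show ?thesis using that[OF L(1)] teq2_sum[OF L(2)] by (simp add: D2_def)
qed

lemma N3X: assumes "y \<in> X"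
  obtains M where "set M \<subseteq> X \<times> X \<times> X" "\<And>G. triK G \<Longrightarrow> N3 y G = (\<Sum>(a,b,c)\<leftarrow>M. G a b c)"
proof -
  obtain L where L: "set L \<subseteq> X \<times> X" "\<And>F. bilK F \<Longrightarrow> D2 y F = (\<Sum>(a,b)\<leftarrow>L. F a b)"
    using D2X[OF assms] by blast
  have "\<forall>u\<in>X. \<exists>Lu. set Lu \<subseteq> X \<times> X \<and> (\<forall>F. bilK F \<longrightarrow> D2 u F = (\<Sum>(a,b)\<leftarrow>Lu. F a b))"
    using D2X by metis
  then obtain f where f: "\<And>u. u \<in> X \<Longrightarrow> set (f u) \<subseteq> X \<times> X \<and> (\<forall>F. bilK F \<longrightarrow> D2 u F = (\<Sum>(a,b)\<leftarrow>f u. F a b))"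
    by metis
  define M where "M = concat (map (\<lambda>(u,c). map (\<lambda>(a,b). (a,b,c)) (f u)) L)"
  have "set M \<subseteq> X \<times> X \<times> X" using L(1) f by (auto simp: M_def)
  moreover have "N3 y G = (\<Sum>(a,b,c)\<leftarrow>M. G a b c)" if G: "triK G" for G
  proof -
    have "N3 y G = (\<Sum>(u,c)\<leftarrow>L. D2 u (\<lambda>a b. G a b c))"
      unfolding N3_def by (rule L(2)) (intro LI3 lK_D2p; rule triKD[OF G])
    also have "\<dots> = (\<Sum>(u,c)\<leftarrow>L. \<Sum>(a,b)\<leftarrow>f u. G a b c)"
    proof (intro arg_cong[where f=sum_list] map_cong refl)
      fix x assume x: "x \<in> set L"
      obtain u c where uc: "x = (u,c)" by (cases x)
      have "u \<in> X" using x uc L(1) by auto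
      have bil: "bilK (\<lambda>a b. G a b c)" by (intro bilKI; rule triKD[OF G])
      have "D2 u (\<lambda>a b. G a b c) = (\<Sum>(a,b)\<leftarrow>f u. G a b c)"
        using f[OF \<open>u \<in> X\<close>] bil by blast
      then show "(\<lambda>(u,c). D2 u (\<lambda>a b. G a b c)) x = (\<lambda>(u,c). \<Sum>(a,b)\<leftarrow>f u. G a b c) x"
        using uc by simp
    qed
    also have "\<dots> = (\<Sum>(a,b,c)\<leftarrow>M. G a b c)"
      by (simp add: M_def sum_list_map_concat split_def comp_def)
    finally show ?thesis .
  qed
  ultimately show ?thesis using that by blast
qed

lemma act_rep: assumes "y \<in> X"
  obtains M where "set M \<subseteq> X \<times> X \<times> X" "\<And>\<phi>. linK \<phi> \<Longrightarrow> act \<phi> y = (\<Sum>(a,b,c)\<leftarrow>M. sc (\<phi> (Si a * Si (Si c))) b)"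
proof -
  obtain M where M: "set M \<subseteq> X \<times> X \<times> X" "\<And>G. triK G \<Longrightarrow> N3 y G = (\<Sum>(a,b,c)\<leftarrow>M. G a b c)"
    using N3X[OF assms] by blast
  have "act \<phi> y = (\<Sum>(a,b,c)\<leftarrow>M. sc (\<phi> (Si a * Si (Si c))) b)" if f: "linK \<phi>" for \<phi>
  proof (rule sepH)
    fix \<chi> assume c: "linK \<chi>"
    have "\<chi> (act \<phi> y) = (\<Sum>(a,b,c)\<leftarrow>M. \<phi> (Si a * Si (Si c)) * \<chi> b)"
      unfolding act_psi[OF c] by (rule M(2)) (intro LI3 c lK_comp[OF f])
    then show "\<chi> (act \<phi> y) = \<chi> (\<Sum>(a,b,c)\<leftarrow>M. sc (\<phi> (Si a * Si (Si c))) b)"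
      by (simp add: psi_sum3[OF c] linK_sc[OF c])
  qed
  then show ?thesis using that M(1) by blast
qed

lemma act_X: assumes "linK \<phi>" "y \<in> X" shows "act \<phi> y \<in> X"
proof -
  obtain M where M: "set M \<subseteq> X \<times> X \<times> X" "\<And>\<phi>. linK \<phi> \<Longrightarrow> act \<phi> y = (\<Sum>(a,b,c)\<leftarrow>M. sc (\<phi> (Si a * Si (Si c))) b)"
    using act_rep[OF assms(2)] by blast
  show ?thesis unfolding M(2)[OF assms(1)]
    by (rule sum_list_X) (use M(1) in \<open>auto simp: subX_unf(3)\<close>)
qed

lemma conv_lin: assumes "linK f" "linK g" shows "linK (conv \<Delta> f g)"
proof -
  have "conv \<Delta> f g = (\<lambda>h. D2 h (\<lambda>a b. f a * g b))" by (simp add: conv_def D2_def)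
  moreover have "linK (\<lambda>h. D2 h (\<lambda>a b. f a * g b))" by (intro lK_D2base LI3 assms)
  ultimately show ?thesis by simp
qed

lemma HXA_lin: assumes "\<phi> \<in> HXA \<Delta> \<sigma> X A" shows "linK \<phi>"
proof -
  obtain L where L: "\<phi> = (\<lambda>h. \<Sum>(c,x,a)\<leftarrow>L. c * conv \<Delta> (lmap \<sigma> x) (rmap \<sigma> a) h)"
    using assms unfolding HXA_def by blast
  have "linK (\<lambda>h. \<Sum>(c,x,a)\<leftarrow>L. c * conv \<Delta> (lmap \<sigma> x) (rmap \<sigma> a) h)"
  proof (rule lK_sum_list)
    fix p :: "'k \<times> 'h \<times> 'h"
    obtain c x a where p: "p = (c,x,a)" by (cases p)
    have "linK (conv \<Delta> (lmap \<sigma> x) (rmap \<sigma> a))"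
      by (rule conv_lin) (simp_all add: lmap_def rmap_def sig_lin1 sig_lin2)
    then show "linK (\<lambda>h. (\<lambda>(c,x,a). c * conv \<Delta> (lmap \<sigma> x) (rmap \<sigma> a) h) p)"
      using p by (simp add: lK_mulR)
  qed
  then show ?thesis using L by simp
qed

lemma lmap_HXA: assumes "z \<in> X" shows "lmap \<sigma> z \<in> HXA \<Delta> \<sigma> X A"
proof -
  have "lmap \<sigma> z = (\<lambda>h. \<Sum>(c,x,a)\<leftarrow>[(1::'k, z, 1::'h)]. c * conv \<Delta> (lmap \<sigma> x) (rmap \<sigma> a) h)"
  proof
    fix h
    have "conv \<Delta> (lmap \<sigma> z) (rmap \<sigma> 1) h = D2 h (\<lambda>a b. \<sigma> a z * \<epsilon> b)"
      by (simp add: conv_def lmap_def rmap_def D2_def sig_1l)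
    also have "\<dots> = \<sigma> h z" by (rule counit2) (rule sig_lin1)
    finally show "lmap \<sigma> z h = (\<Sum>(c,x,a)\<leftarrow>[(1::'k, z, 1::'h)]. c * conv \<Delta> (lmap \<sigma> x) (rmap \<sigma> a) h)"
      by (simp add: lmap_def)
  qed
  then show ?thesis unfolding HXA_def using assms oneA by (intro CollectI exI[of _ "[(1::'k, z, 1::'h)]"]) auto
qed

lemma coact_Dset: assumes "y \<in> X" shows "coact y \<in> Dset sc (HXA \<Delta> \<sigma> X A) X"
proof -
  obtain M where M: "set M \<subseteq> X \<times> X \<times> X" "\<And>\<phi>. linK \<phi> \<Longrightarrow> act \<phi> y = (\<Sum>(a,b,c)\<leftarrow>M. sc (\<phi> (Si a * Si (Si c))) b)"
    using act_rep[OF assms] by blast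
  define L where "L = map (\<lambda>(a,b,c). (lmap \<sigma> (Si a * Si (Si c)), b)) M"
  have "Dvalid (HXA \<Delta> \<sigma> X A) X L"
    using M(1) by (auto simp: Dvalid_def L_def intro!: lmap_HXA subX_unf(5) Si_X)
  moreover have "coact y = evD sc L"
  proof
    fix h
    show "coact y h = evD sc L h"
      unfolding coact_act M(2)[OF sig_lin2]
      by (simp add: evD_def L_def lmap_def split_def comp_def)
  qed
  ultimately show ?thesis unfolding Dset_def by blast
qed

lemma sig_conv: "conv \<Delta> (\<sigma> h') (\<sigma> h) = \<sigma> (h' * h)"
  by (rule ext) (simp add: conv_def sig_m1 D2_def)

lemma sig_one_fun: "\<sigma> 1 = \<epsilon>" by (rule ext) (simp add: sig_1l)

lemma compat: assumes f: "linK \<phi>"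
  shows "(\<Sum>(h1,h2)\<leftarrow>\<Delta> h. act (\<lambda>w. \<phi> (w * h1)) (coact y h2))
       = (\<Sum>(h1,h2)\<leftarrow>\<Delta> h. coact (act (\<lambda>w. \<phi> (h2 * w)) y) h1)"
proof (rule sepH)
  fix \<chi> assume c: "linK \<chi>"
  note L = LI3 c f lK_comp[OF f] sig_lin1 sig_lin2
  have f1: "linK (\<lambda>w. \<phi> (w * h1))" for h1 by (intro L)
  have f2: "linK (\<lambda>w. \<phi> (h2 * w))" for h2 by (intro L)
  have "\<chi> (\<Sum>(h1,h2)\<leftarrow>\<Delta> h. act (\<lambda>w. \<phi> (w * h1)) (coact y h2))
      = D2 h (\<lambda>h1 h2. N3 y (\<lambda>a b c. D2 (Si a * Si (Si c)) (\<lambda>k1 k2. \<phi> (k1 * h1) * \<sigma> h2 k2 * \<chi> b)))"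
    unfolding psi_sum2[OF c] D2_def[symmetric] coact_act act_conv[OF f1 sig_lin2, symmetric]
    by (simp add: act_psi[OF c] conv_def D2_def sum_list_mult_right split_def)
  also have "\<dots> = N3 y (\<lambda>a b c. D2 h (\<lambda>h1 h2. D2 (Si a * Si (Si c)) (\<lambda>k1 k2. \<phi> (k1 * h1) * \<sigma> h2 k2 * \<chi> b)))"
    by (rule N3_D2_swap[symmetric])
  also have "\<dots> = N3 y (\<lambda>a b c. D2 h (\<lambda>h1 h2. D2 (Si a * Si (Si c)) (\<lambda>k1 k2. \<sigma> h1 k1 * \<phi> (h2 * k2) * \<chi> b)))"
  proof -
    have "\<And>b k. D2 h (\<lambda>h1 h2. D2 k (\<lambda>k1 k2. \<phi> (k1 * h1) * \<sigma> h2 k2 * \<chi> b))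
         = D2 h (\<lambda>h1 h2. D2 k (\<lambda>k1 k2. \<sigma> h1 k1 * \<phi> (h2 * k2) * \<chi> b))"
    proof -
      fix b k
      have "D2 h (\<lambda>h1 h2. D2 k (\<lambda>k1 k2. \<sigma> h1 k1 * (\<phi> (h2 * k2) * \<chi> b)))
          = D2 h (\<lambda>h1 h2. D2 k (\<lambda>k1 k2. \<sigma> h2 k2 * (\<phi> (k1 * h1) * \<chi> b)))"
        by (rule cqtK[of "\<lambda>t. \<phi> t * \<chi> b"]) (intro L)
      then show "D2 h (\<lambda>h1 h2. D2 k (\<lambda>k1 k2. \<phi> (k1 * h1) * \<sigma> h2 k2 * \<chi> b))
         = D2 h (\<lambda>h1 h2. D2 k (\<lambda>k1 k2. \<sigma> h1 k1 * \<phi> (h2 * k2) * \<chi> b))"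
        by (simp add: mult_ac)
    qed
    then show ?thesis by simp
  qed
  also have "\<dots> = D2 h (\<lambda>h1 h2. N3 y (\<lambda>a b c. D2 (Si a * Si (Si c)) (\<lambda>k1 k2. \<sigma> h1 k1 * \<phi> (h2 * k2) * \<chi> b)))"
    by (rule N3_D2_swap)
  also have "\<dots> = \<chi> (\<Sum>(h1,h2)\<leftarrow>\<Delta> h. coact (act (\<lambda>w. \<phi> (h2 * w)) y) h1)"
    unfolding psi_sum2[OF c] D2_def[symmetric] coact_act act_conv[OF sig_lin2 f2, symmetric]
    by (simp add: act_psi[OF c] conv_def D2_def sum_list_mult_right split_def)
  finally show "\<chi> (\<Sum>(h1,h2)\<leftarrow>\<Delta> h. act (\<lambda>w. \<phi> (w * h1)) (coact y h2))
      = \<chi> (\<Sum>(h1,h2)\<leftarrow>\<Delta> h. coact (act (\<lambda>w. \<phi> (h2 * w)) y) h1)" .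
qed

lemma YD: "left_YD sc \<Delta> \<epsilon> (HXA \<Delta> \<sigma> X A) X act coact"
  unfolding left_YD_def
proof (intro conjI ballI allI)
  show "act \<phi> y \<in> X" if "\<phi> \<in> HXA \<Delta> \<sigma> X A" "y \<in> X" for \<phi> y
    using act_X[OF HXA_lin[OF that(1)] that(2)] .
  show "act \<phi> (y + z) = act \<phi> y + act \<phi> z" if "\<phi> \<in> HXA \<Delta> \<sigma> X A" for \<phi> y z
    using act_add[OF HXA_lin[OF that]] .
  show "act \<phi> (sc c y) = sc c (act \<phi> y)" if "\<phi> \<in> HXA \<Delta> \<sigma> X A" for \<phi> c y
    using act_sc[OF HXA_lin[OF that]] .
  show "act (\<lambda>h. \<phi> h + \<psi> h) y = act \<phi> y + act \<psi> y" for \<phi> \<psi> y by (rule act_plus_fun)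
  show "act (\<lambda>h. c * \<phi> h) y = sc c (act \<phi> y)" for \<phi> c y by (rule act_scal_fun)
  show "act \<epsilon> y = y" for y by (rule act_eps)
  show "act (conv \<Delta> \<phi> \<psi>) y = act \<phi> (act \<psi> y)" if "\<phi> \<in> HXA \<Delta> \<sigma> X A" "\<psi> \<in> HXA \<Delta> \<sigma> X A" for \<phi> \<psi> y
    using act_conv[OF HXA_lin[OF that(1)] HXA_lin[OF that(2)]] .
  show "coact y \<in> Dset sc (HXA \<Delta> \<sigma> X A) X" if "y \<in> X" for y using coact_Dset[OF that] .
  show "coact (y + z) = (\<lambda>h. coact y h + coact z h)" for y z
    by (rule ext) (simp add: coact_act act_add[OF sig_lin2])
  show "coact (sc c y) = (\<lambda>h. sc c (coact y h))" for c y
    by (rule ext) (simp add: coact_act act_sc[OF sig_lin2])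
  show "coact (coact y h) h' = coact y (h' * h)" for y h h'
    by (simp add: coact_act act_conv[OF sig_lin2 sig_lin2, symmetric] sig_conv)
  show "coact y 1 = y" for y by (simp add: coact_act sig_one_fun act_eps)
  show "(\<Sum>(h1,h2)\<leftarrow>\<Delta> h. act (\<lambda>w. \<phi> (w * h1)) (coact y h2))
      = (\<Sum>(h1,h2)\<leftarrow>\<Delta> h. coact (act (\<lambda>w. \<phi> (h2 * w)) y) h1)" if "\<phi> \<in> HXA \<Delta> \<sigma> X A" for \<phi> y h
    using compat[OF HXA_lin[OF that]] .
qed

end

context HC
begin

lemma theta_in_B: assumes x: "x \<in> X" shows "th x \<in> Bset sc \<Delta> \<epsilon> S \<sigma> X A"
proof -
  obtain L0 where L0: "set L0 \<subseteq> X \<times> X" "\<And>F. bilK F \<Longrightarrow> D2 x F = (\<Sum>(a,b)\<leftarrow>L0. F a b)"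
    using D2X[OF x] by blast
  define Lt where "Lt = map (\<lambda>(x1,x2). (lmap \<sigma> (Si (Si x2)), x1)) L0"
  have valid: "Dvalid (HXA \<Delta> \<sigma> X A) X Lt"
    using L0(1) by (auto simp: Dvalid_def Lt_def intro!: lmap_HXA Si_X)
  have ev: "evD sc Lt = th x"
  proof
    fix h
    show "evD sc Lt h = th x h"
    proof (rule sepH)
      fix \<chi> assume c: "linK \<chi>"
      have "\<chi> (evD sc Lt h) = (\<Sum>(x1,x2)\<leftarrow>L0. \<sigma> h (Si (Si x2)) * \<chi> x1)"
        by (simp add: evD_def Lt_def lmap_def linK_sum_list[OF c] linK_sc[OF c] split_def comp_def)
      also have "\<dots> = D2 x (\<lambda>x1 x2. \<sigma> h (Si (Si x2)) * \<chi> x1)"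
        by (rule L0(2)[symmetric]) (intro LI3 c)
      finally show "\<chi> (evD sc Lt h) = \<chi> (th x h)" by (simp add: theta_psi[OF c])
    qed
  qed
  have bc: "B_lhs sc \<Delta> \<sigma> (inv S) Lt h h' = B_rhs sc \<epsilon> Lt h h'" for h h'
  proof (rule sepH)
    fix \<chi> assume c: "linK \<chi>"
    note L = LI3 c sig_lin1 sig_lin2
    have "\<chi> (B_lhs sc \<Delta> \<sigma> (inv S) Lt h h')
        = (\<Sum>(u,v)\<leftarrow>L0. D2 u (\<lambda>x1 x2. D2 h' (\<lambda>a b. \<sigma> (a * h) (Si (Si v)) * \<sigma> b (Si x2) * \<chi> x1)))"
      by (simp add: B_lhs_def Lt_def lmap_def linK_sum_list[OF c] linK_sc[OF c] split_def comp_def D2_def)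
    also have "\<dots> = N3 x (\<lambda>x1 x2 v. D2 h' (\<lambda>a b. \<sigma> (a * h) (Si (Si v)) * \<sigma> b (Si x2) * \<chi> x1))"
      unfolding N3_def by (rule L0(2)[symmetric]) (intro L)
    also have "\<dots> = N3 x (\<lambda>x1 x2 v. D2 v (\<lambda>p q. \<sigma> h' (Si x2 * Si (Si p)) * \<sigma> h (Si (Si q)) * \<chi> x1))"
      unfolding N3_def
    proof (intro D2_cong)
      fix x1 x2 v
      have "D2 h' (\<lambda>a b. \<sigma> (a * h) (Si (Si v)) * \<sigma> b (Si x2) * \<chi> x1)
          = D2 h' (\<lambda>a b. D2 v (\<lambda>p q. \<sigma> a (Si (Si p)) * \<sigma> h (Si (Si q))) * \<sigma> b (Si x2) * \<chi> x1)"
        apply (rule D2_cong)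
        apply (simp only: sig_m1)
        apply (subst D2_SiSi)
         apply (intro L)
        apply (rule refl)
        done
      also have "\<dots> = D2 v (\<lambda>p q. D2 h' (\<lambda>a b. \<sigma> b (Si x2) * \<sigma> a (Si (Si p))) * \<sigma> h (Si (Si q)) * \<chi> x1)"
        by (simp add: D2_def sum_list_mult_right sum_list_mult_left split_def sum_list_swap[of _ "\<Delta> h'"] mult_ac)
      also have "\<dots> = D2 v (\<lambda>p q. \<sigma> h' (Si x2 * Si (Si p)) * \<sigma> h (Si (Si q)) * \<chi> x1)"
        by (simp add: sig_m2)
      finally show "D2 h' (\<lambda>a b. \<sigma> (a * h) (Si (Si v)) * \<sigma> b (Si x2) * \<chi> x1) = D2 v (\<lambda>p q. \<sigma> h' (Si x2 * Si (Si p)) * \<sigma> h (Si (Si q)) * \<chi> x1)" .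
    qed
    also have "\<dots> = N4 x (\<lambda>x1 x2 p q. \<sigma> h' (Si x2 * Si (Si p)) * \<sigma> h (Si (Si q)) * \<chi> x1)"
      by (rule sp3_3) (intro L)
    also have "\<dots> = N3 x (\<lambda>x1 w q. D2 w (\<lambda>x2 p. \<sigma> h' (Si x2 * Si (Si p)) * \<sigma> h (Si (Si q)) * \<chi> x1))"
      by (rule sp3_2[symmetric]) (intro L)
    also have "\<dots> = N3 x (\<lambda>x1 w q. \<epsilon> w * (\<epsilon> h' * \<sigma> h (Si (Si q)) * \<chi> x1))"
      unfolding N3_def
    proof (intro D2_cong)
      fix x1 w q
      have "D2 w (\<lambda>x2 p. \<sigma> h' (Si (Si p * x2)) * \<sigma> h (Si (Si q)) * \<chi> x1) = \<epsilon> w * (\<sigma> h' (Si 1) * \<sigma> h (Si (Si q)) * \<chi> x1)"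
        by (rule antipSi1[of "\<lambda>t. \<sigma> h' (Si t) * \<sigma> h (Si (Si q)) * \<chi> x1"]) (intro L)
      then show "D2 w (\<lambda>x2 p. \<sigma> h' (Si x2 * Si (Si p)) * \<sigma> h (Si (Si q)) * \<chi> x1) = \<epsilon> w * (\<epsilon> h' * \<sigma> h (Si (Si q)) * \<chi> x1)"
        by (simp add: Si_mult Si_1 sig_1r)
    qed
    also have "\<dots> = D2 x (\<lambda>x1 q. \<epsilon> h' * \<sigma> h (Si (Si q)) * \<chi> x1)"
      by (rule contr3_2) (intro L)
    also have "\<dots> = (\<Sum>(x1,x2)\<leftarrow>L0. \<epsilon> h' * \<sigma> h (Si (Si x2)) * \<chi> x1)"
      by (rule L0(2)) (intro L)
    also have "\<dots> = \<chi> (B_rhs sc \<epsilon> Lt h h')"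
      by (simp add: B_rhs_def Lt_def lmap_def linK_sum_list[OF c] linK_sc[OF c] split_def comp_def mult_ac)
    finally show "\<chi> (B_lhs sc \<Delta> \<sigma> (inv S) Lt h h') = \<chi> (B_rhs sc \<epsilon> Lt h h')" .
  qed
  show ?thesis unfolding Bset_def using valid ev bc by (intro CollectI exI[of _ Lt]) auto
qed


lemma key_B: assumes m: "linK m" and c: "linK \<chi>"
  shows "D2 h (\<lambda>h1 h2. D2 y (\<lambda>y1 y2. D2 h1 (\<lambda>a b. m a * \<sigma> b (Si y2) * D2 y1 (\<lambda>u v. \<sigma> h2 (Si (Si v)) * \<chi> u))))
       = m h * \<chi> y"
proof -
  note L = LI3 c m sig_lin1 sig_lin2
  have "D2 h (\<lambda>h1 h2. D2 y (\<lambda>y1 y2. D2 h1 (\<lambda>a b. m a * \<sigma> b (Si y2) * D2 y1 (\<lambda>u v. \<sigma> h2 (Si (Si v)) * \<chi> u))))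
      = D2 h (\<lambda>h1 h2. D2 h1 (\<lambda>a b. D2 y (\<lambda>y1 y2. D2 y1 (\<lambda>u v. m a * \<sigma> b (Si y2) * \<sigma> h2 (Si (Si v)) * \<chi> u))))"
    by (rule D2_cong, rule trans[OF _ D2_swap]) (simp add: D2_def sum_list_mult_left split_def mult_ac)
  also have "\<dots> = N3 h (\<lambda>a b c. N3 y (\<lambda>u v w. m a * \<sigma> b (Si w) * \<sigma> c (Si (Si v)) * \<chi> u))"
    by (simp add: N3_def)
  also have "\<dots> = D2 h (\<lambda>a z. D2 z (\<lambda>b c. N3 y (\<lambda>u v w. m a * \<sigma> b (Si w) * \<sigma> c (Si (Si v)) * \<chi> u)))"
    by (rule sp2_2[symmetric]) (intro L)
  also have "\<dots> = D2 h (\<lambda>a z. N3 y (\<lambda>u v w. D2 z (\<lambda>b c. m a * \<sigma> b (Si w) * \<sigma> c (Si (Si v)) * \<chi> u)))"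
    by (rule D2_cong, rule N3_D2_swap[symmetric])
  also have "\<dots> = D2 h (\<lambda>a z. N3 y (\<lambda>u v w. m a * \<sigma> z (Si (w * Si v)) * \<chi> u))"
  proof -
    have "\<And>a z u v w. D2 z (\<lambda>b c. m a * \<sigma> b (Si w) * \<sigma> c (Si (Si v)) * \<chi> u) = m a * \<sigma> z (Si (w * Si v)) * \<chi> u"
      by (simp add: Si_mult sig_m2 D2_def sum_list_mult_left sum_list_mult_right split_def mult_ac)
    then show ?thesis by simp
  qed
  also have "\<dots> = D2 h (\<lambda>a z. m a * \<chi> y * \<epsilon> z)"
  proof (rule D2_cong)
    fix a z
    have "N3 y (\<lambda>u v w. m a * \<sigma> z (Si (w * Si v)) * \<chi> u) = D2 y (\<lambda>u t. D2 t (\<lambda>v w. m a * \<sigma> z (Si (w * Si v)) * \<chi> u))"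
      by (rule sp2_2[symmetric]) (intro L)
    also have "\<dots> = D2 y (\<lambda>u t. (m a * \<epsilon> z * \<chi> u) * \<epsilon> t)"
    proof (rule D2_cong)
      fix u t
      have "D2 t (\<lambda>v w. m a * \<sigma> z (Si (w * Si v)) * \<chi> u) = \<epsilon> t * (m a * \<sigma> z (Si 1) * \<chi> u)"
        by (rule antipSi2[of "\<lambda>s. m a * \<sigma> z (Si s) * \<chi> u"]) (intro L)
      then show "D2 t (\<lambda>v w. m a * \<sigma> z (Si (w * Si v)) * \<chi> u) = (m a * \<epsilon> z * \<chi> u) * \<epsilon> t"
        by (simp add: Si_1 sig_1r mult_ac)
    qed
    also have "\<dots> = m a * \<epsilon> z * \<chi> y" by (rule counit2) (intro L)
    finally show "N3 y (\<lambda>u v w. m a * \<sigma> z (Si (w * Si v)) * \<chi> u) = m a * \<chi> y * \<epsilon> z"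
      by (simp add: mult_ac)
  qed
  also have "\<dots> = m h * \<chi> y" by (rule counit2) (intro L)
  finally show ?thesis .
qed

lemma theta_lin_fun: "linK \<chi> \<Longrightarrow> linK (\<lambda>v. \<chi> (th v h))"
proof -
  assume c: "linK \<chi>"
  have "linK (\<lambda>v. D2 v (\<lambda>x1 x2. \<sigma> h (Si (Si x2)) * \<chi> x1))" by (intro LI3 lK_D2base c)
  then show ?thesis by (simp add: theta_psi[OF c])
qed

lemma B_in_theta: assumes d: "d \<in> Bset sc \<Delta> \<epsilon> S \<sigma> X A" shows "d \<in> th ` X"
proof -
  obtain L where L: "d = evD sc L" "Dvalid (HXA \<Delta> \<sigma> X A) X L"
    "\<And>h h'. B_lhs sc \<Delta> \<sigma> (inv S) L h h' = B_rhs sc \<epsilon> L h h'"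
    using d unfolding Bset_def by blast
  have mem: "\<And>m y. (m, y) \<in> set L \<Longrightarrow> linK m \<and> y \<in> X"
    using L(2) by (auto simp: Dvalid_def intro: HXA_lin)
  define x0 where "x0 = evD sc L 1"
  have x0X: "x0 \<in> X"
    unfolding x0_def evD_def by (rule sum_list_X) (auto dest: mem intro: subX_unf(3))
  have "evD sc L = th x0"
  proof
    fix h
    show "evD sc L h = th x0 h"
    proof (rule sepH)
      fix \<chi> assume c: "linK \<chi>"
      define \<Phi> where "\<Phi> h2 v = \<chi> (th v h2)" for h2 v
      have Phil: "linK (\<Phi> h2)" for h2 unfolding \<Phi>_def[abs_def] by (rule theta_lin_fun[OF c])
      have Phi_th: "\<Phi> h2 v = D2 v (\<lambda>x1 x2. \<sigma> h2 (Si (Si x2)) * \<chi> x1)" for h2 v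
        by (simp add: \<Phi>_def theta_psi[OF c])
      have rhs: "\<Phi> h2 (B_rhs sc \<epsilon> L 1 h1) = (\<Sum>(m,y)\<leftarrow>L. \<epsilon> h1 * (m 1 * \<Phi> h2 y))" for h1 h2
        by (simp add: B_rhs_def linK_sum_list[OF Phil] linK_sc[OF Phil] split_def mult_ac)
      have lhs: "\<Phi> h2 (B_lhs sc \<Delta> \<sigma> (inv S) L 1 h1) = (\<Sum>(m,y)\<leftarrow>L. D2 y (\<lambda>y1 y2. D2 h1 (\<lambda>a b. m a * \<sigma> b (Si y2) * \<Phi> h2 y1)))" for h1 h2
        by (simp add: B_lhs_def linK_sum_list[OF Phil] linK_sc[OF Phil] split_def D2_def)
      have "\<chi> (th x0 h) = \<Phi> h x0" by (simp add: \<Phi>_def)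
      also have "\<dots> = (\<Sum>(m,y)\<leftarrow>L. m 1 * \<Phi> h y)"
        by (simp add: x0_def evD_def linK_sum_list[OF Phil] linK_sc[OF Phil] split_def)
      also have "\<dots> = D2 h (\<lambda>h1 h2. \<epsilon> h1 * (\<Sum>(m,y)\<leftarrow>L. m 1 * \<Phi> h2 y))"
      proof (rule counit1[symmetric])
        show "linK (\<lambda>h2. \<Sum>(m,y)\<leftarrow>L. m 1 * \<Phi> h2 y)"
          unfolding Phi_th by (intro lK_sum_list2 LI3 c)
      qed
      also have "\<dots> = D2 h (\<lambda>h1 h2. \<Phi> h2 (B_rhs sc \<epsilon> L 1 h1))"
        by (simp add: rhs sum_list_mult_left split_def)
      also have "\<dots> = D2 h (\<lambda>h1 h2. \<Phi> h2 (B_lhs sc \<Delta> \<sigma> (inv S) L 1 h1))"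
        by (simp add: L(3))
      also have "\<dots> = (\<Sum>(m,y)\<leftarrow>L. D2 h (\<lambda>h1 h2. D2 y (\<lambda>y1 y2. D2 h1 (\<lambda>a b. m a * \<sigma> b (Si y2) * \<Phi> h2 y1))))"
        unfolding lhs D2_def[of h] by (simp add: split_def sum_list_swap[of _ L])
      also have "\<dots> = (\<Sum>(m,y)\<leftarrow>L. m h * \<chi> y)"
      proof (intro arg_cong[where f=sum_list] map_cong refl)
        fix p assume p: "p \<in> set L"
        obtain m y where my: "p = (m, y)" by (cases p)
        have "linK m" using mem p my by blast
        then show "(\<lambda>(m,y). D2 h (\<lambda>h1 h2. D2 y (\<lambda>y1 y2. D2 h1 (\<lambda>a b. m a * \<sigma> b (Si y2) * \<Phi> h2 y1)))) p
            = (\<lambda>(m,y). m h * \<chi> y) p"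
          using key_B[OF _ c] my by (simp add: Phi_th)
      qed
      also have "\<dots> = \<chi> (evD sc L h)"
        by (simp add: evD_def linK_sum_list[OF c] linK_sc[OF c] split_def)
      finally show "\<chi> (evD sc L h) = \<chi> (th x0 h)" by simp
    qed
  qed
  then show ?thesis using L(1) x0X by blast
qed

lemma Bset_eq: "Bset sc \<Delta> \<epsilon> S \<sigma> X A = th ` X"
  using B_in_theta theta_in_B by blast

end

context HC
begin

lemma conv_D2: "conv \<Delta> f g = (\<lambda>h. D2 h (\<lambda>a b. f a * g b))"
  by (rule ext) (simp add: conv_def D2_def)

lemma chi_evD: "linK \<chi> \<Longrightarrow> \<chi> (evD sc L h) = (\<Sum>(m,y)\<leftarrow>L. m h * \<chi> y)"
  by (simp add: evD_def linK_sum_list linK_sc split_def)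

lemma N3_one: assumes "triK G" shows "N3 1 G = G 1 1 1"
proof -
  have "N3 1 G = D2 1 (\<lambda>a b. G a b 1)"
    unfolding N3_def by (rule D2_one) (intro LI3; rule triKD[OF assms])
  also have "\<dots> = G 1 1 1" by (rule D2_one) (intro LI3; rule triKD[OF assms])
  finally show ?thesis .
qed

lemma multD_evD: assumes c: "linK \<chi>"
  shows "\<chi> (evD sc (multD \<Delta> Si M N) h) = (\<Sum>(m,x)\<leftarrow>M. \<Sum>(n,y)\<leftarrow>N. \<Sum>(x1,x2,x3)\<leftarrow>delta2 \<Delta> x. conv \<Delta> m (\<lambda>b. n (Si x3 * b * x1)) h * \<chi> (x2 * y))"
  unfolding chi_evD[OF c] multD_def
  by (simp add: sum_list_map_concat split_def comp_def)

lemma QD2: "D2 x (\<lambda>x1 x2. D2 a (\<lambda>a1 a2. D2 b (\<lambda>p q. G x1 x2 a1 a2 p q)))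
   = D2 b (\<lambda>p q. D2 x (\<lambda>x1 x2. D2 a (\<lambda>a1 a2. G x1 x2 a1 a2 p q)))"
proof -
  have "D2 x (\<lambda>x1 x2. D2 a (\<lambda>a1 a2. D2 b (\<lambda>p q. G x1 x2 a1 a2 p q)))
     = D2 x (\<lambda>x1 x2. D2 b (\<lambda>p q. D2 a (\<lambda>a1 a2. G x1 x2 a1 a2 p q)))"
    by (rule D2_cong, rule D2_swap)
  also have "\<dots> = D2 b (\<lambda>p q. D2 x (\<lambda>x1 x2. D2 a (\<lambda>a1 a2. G x1 x2 a1 a2 p q)))"
    by (rule D2_swap)
  finally show ?thesis .
qed

lemma QN3: "D2 x (\<lambda>x1 x2. D2 a (\<lambda>a1 a2. N3 b (\<lambda>p q r. G x1 x2 a1 a2 p q r)))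
   = N3 b (\<lambda>p q r. D2 x (\<lambda>x1 x2. D2 a (\<lambda>a1 a2. G x1 x2 a1 a2 p q r)))"
  unfolding N3_def by (subst QD2, rule D2_cong, rule QD2)

lemma D2_prod: "D2 U F * D2 V G = D2 U (\<lambda>u1 u2. D2 V (\<lambda>v1 v2. F u1 u2 * G v1 v2))"
proof -
  have "D2 U F * D2 V G = D2 U (\<lambda>u1 u2. F u1 u2 * D2 V G)"
    by (simp add: D2_def[of U] sum_list_mult_right split_def)
  also have "\<dots> = D2 U (\<lambda>u1 u2. D2 V (\<lambda>v1 v2. F u1 u2 * G v1 v2))"
    by (rule D2_cong) (simp add: D2_def sum_list_mult_left split_def)
  finally show ?thesis .
qed

lemma Phi_id: "D2 x (\<lambda>x1 x2. D2 a (\<lambda>a1 a2. conv \<Delta> (lmap \<sigma> x2) (rmap \<sigma> a1) U * conv \<Delta> (lmap \<sigma> x1) (rmap \<sigma> a2) V))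
  = conv \<Delta> (lmap \<sigma> x) (rmap \<sigma> a) (V * U)"
proof -
  note L = LI3 sig_lin1 sig_lin2
  have "D2 x (\<lambda>x1 x2. D2 a (\<lambda>a1 a2. conv \<Delta> (lmap \<sigma> x2) (rmap \<sigma> a1) U * conv \<Delta> (lmap \<sigma> x1) (rmap \<sigma> a2) V))
      = D2 x (\<lambda>x1 x2. D2 a (\<lambda>a1 a2. D2 V (\<lambda>v1 v2. D2 U (\<lambda>u1 u2. \<sigma> u1 x2 * \<sigma> a1 u2 * (\<sigma> v1 x1 * \<sigma> a2 v2)))))"
    unfolding conv_D2 lmap_def rmap_def D2_prod by (intro D2_cong D2_swap)
  also have "\<dots> = D2 V (\<lambda>v1 v2. D2 x (\<lambda>x1 x2. D2 a (\<lambda>a1 a2. D2 U (\<lambda>u1 u2. \<sigma> u1 x2 * \<sigma> a1 u2 * (\<sigma> v1 x1 * \<sigma> a2 v2)))))"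
    by (rule QD2)
  also have "\<dots> = D2 V (\<lambda>v1 v2. D2 U (\<lambda>u1 u2. D2 x (\<lambda>x1 x2. D2 a (\<lambda>a1 a2. \<sigma> u1 x2 * \<sigma> a1 u2 * (\<sigma> v1 x1 * \<sigma> a2 v2)))))"
    by (rule D2_cong, rule QD2)
  also have "\<dots> = D2 V (\<lambda>v1 v2. D2 U (\<lambda>u1 u2. D2 x (\<lambda>x1 x2. \<sigma> v1 x1 * \<sigma> u1 x2) * D2 a (\<lambda>a1 a2. \<sigma> a2 v2 * \<sigma> a1 u2)))"
    by (intro D2_cong) (subst D2_prod, intro D2_cong, simp add: mult_ac)
  also have "\<dots> = D2 V (\<lambda>v1 v2. D2 U (\<lambda>u1 u2. \<sigma> (v1 * u1) x * \<sigma> a (v2 * u2)))"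
    by (simp add: sig_m1 sig_m2)
  also have "\<dots> = conv \<Delta> (lmap \<sigma> x) (rmap \<sigma> a) (V * U)"
    unfolding conv_D2 lmap_def rmap_def by (rule D2_mult[symmetric]) (intro L)
  finally show ?thesis .
qed

lemma cqt_id: assumes f: "linK f"
  shows "D2 V (\<lambda>v1 v2. N3 h (\<lambda>h1 h2 h3. f (Si h3 * v1 * h1) * \<sigma> h2 v2)) = D2 V (\<lambda>v1 v2. \<sigma> h v1 * f v2)"
proof -
  note L = LI3 f lK_comp[OF f] sig_lin1 sig_lin2
  have "D2 V (\<lambda>v1 v2. N3 h (\<lambda>h1 h2 h3. f (Si h3 * v1 * h1) * \<sigma> h2 v2))
      = D2 h (\<lambda>u h3. D2 u (\<lambda>h1 h2. D2 V (\<lambda>v1 v2. \<sigma> h2 v2 * f (Si h3 * (v1 * h1)))))"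
    unfolding N3_def by (subst D2_swap, intro D2_cong, subst D2_swap) (simp add: mult_ac)
  also have "\<dots> = D2 h (\<lambda>u h3. D2 u (\<lambda>h1 h2. D2 V (\<lambda>v1 v2. \<sigma> h1 v1 * f (Si h3 * (h2 * v2)))))"
    by (rule D2_cong, rule cqtK[symmetric]) (intro L)
  also have "\<dots> = N3 h (\<lambda>h1 h2 h3. D2 V (\<lambda>v1 v2. \<sigma> h1 v1 * f (Si h3 * h2 * v2)))"
    by (simp add: N3_def mult.assoc)
  also have "\<dots> = D2 h (\<lambda>h1 w. D2 w (\<lambda>h2 h3. D2 V (\<lambda>v1 v2. \<sigma> h1 v1 * f (Si h3 * h2 * v2))))"
    by (rule sp2_2[symmetric]) (intro L)
  also have "\<dots> = D2 h (\<lambda>h1 w. D2 V (\<lambda>v1 v2. \<sigma> h1 v1 * f v2) * \<epsilon> w)"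
  proof (rule D2_cong)
    fix h1 w
    have "D2 w (\<lambda>h2 h3. D2 V (\<lambda>v1 v2. \<sigma> h1 v1 * f (Si h3 * h2 * v2))) = \<epsilon> w * D2 V (\<lambda>v1 v2. \<sigma> h1 v1 * f (1 * v2))"
      by (rule antipSi1[of "\<lambda>t. D2 V (\<lambda>v1 v2. \<sigma> h1 v1 * f (t * v2))"]) (intro L)
    then show "D2 w (\<lambda>h2 h3. D2 V (\<lambda>v1 v2. \<sigma> h1 v1 * f (Si h3 * h2 * v2))) = D2 V (\<lambda>v1 v2. \<sigma> h1 v1 * f v2) * \<epsilon> w"
      by (simp add: mult.commute)
  qed
  also have "\<dots> = D2 V (\<lambda>v1 v2. \<sigma> h v1 * f v2)"
    by (rule counit2[of "\<lambda>h1. D2 V (\<lambda>v1 v2. \<sigma> h1 v1 * f v2)"]) (intro L)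
  finally show ?thesis .
qed

end

context HC
begin

lemma actB_item: assumes c: "linK \<chi>" and f1: "linK F1" and f2: "linK F2" and n: "\<And>n y. (n, y) \<in> set L \<Longrightarrow> linK n"
  shows "\<chi> (evD sc (multD \<Delta> Si (multD \<Delta> Si (iD F1) L) (iD F2)) h)
       = (\<Sum>(n,y)\<leftarrow>L. N3 y (\<lambda>p q r. N3 h (\<lambda>h1 h2 h3. F1 h1 * n h2 * F2 (Si r * h3 * p) * \<chi> q)))"
proof -
  have "\<chi> (evD sc (multD \<Delta> Si (multD \<Delta> Si (iD F1) L) (iD F2)) h)
      = (\<Sum>(n,y)\<leftarrow>L. N3 1 (\<lambda>p q r. N3 (q * y) (\<lambda>x1 x2 x3. conv \<Delta> (conv \<Delta> F1 (\<lambda>b. n (Si r * b * p))) (\<lambda>b. F2 (Si x3 * b * x1)) h * \<chi> x2)))"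
    unfolding multD_evD[OF c]
    by (simp add: multD_def iD_def sum_list_map_concat sum_delta2_N3[symmetric] split_def comp_def)
  also have "\<dots> = (\<Sum>(n,y)\<leftarrow>L. N3 y (\<lambda>p q r. N3 h (\<lambda>h1 h2 h3. F1 h1 * n h2 * F2 (Si r * h3 * p) * \<chi> q)))"
  proof (intro arg_cong[where f=sum_list] map_cong refl)
    fix z assume z: "z \<in> set L"
    obtain n y where ny: "z = (n, y)" by (cases z)
    have nl: "linK n" using n z ny by blast
    note L = LI3 c f1 f2 nl lK_comp[OF f1] lK_comp[OF f2] lK_comp[OF nl]
    have "N3 1 (\<lambda>p q r. N3 (q * y) (\<lambda>x1 x2 x3. conv \<Delta> (conv \<Delta> F1 (\<lambda>b. n (Si r * b * p))) (\<lambda>b. F2 (Si x3 * b * x1)) h * \<chi> x2))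
        = N3 (1 * y) (\<lambda>x1 x2 x3. conv \<Delta> (conv \<Delta> F1 (\<lambda>b. n (Si 1 * b * 1))) (\<lambda>b. F2 (Si x3 * b * x1)) h * \<chi> x2)"
      unfolding conv_D2 by (rule N3_one) (intro L)
    also have "\<dots> = N3 y (\<lambda>p q r. N3 h (\<lambda>h1 h2 h3. F1 h1 * n h2 * F2 (Si r * h3 * p) * \<chi> q))"
      by (simp add: Si_1 conv_D2 N3_def D2_def sum_list_mult_right split_def)
    finally show "(\<lambda>(n,y). N3 1 (\<lambda>p q r. N3 (q * y) (\<lambda>x1 x2 x3. conv \<Delta> (conv \<Delta> F1 (\<lambda>b. n (Si r * b * p))) (\<lambda>b. F2 (Si x3 * b * x1)) h * \<chi> x2))) z
        = (\<lambda>(n,y). N3 y (\<lambda>p q r. N3 h (\<lambda>h1 h2 h3. F1 h1 * n h2 * F2 (Si r * h3 * p) * \<chi> q))) z"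
      using ny by simp
  qed
  finally show ?thesis .
qed


lemma sum_product_D2: "(\<Sum>((x1,x2),(a1,a2))\<leftarrow>List.product (\<Delta> x) (\<Delta> a). G x1 x2 a1 a2)
   = D2 x (\<lambda>x1 x2. D2 a (\<lambda>a1 a2. G x1 x2 a1 a2))"
  by (simp add: product_concat_map sum_list_map_concat D2_def split_def comp_def)

lemma D2D2_mult_right: "D2 x (\<lambda>x1 x2. D2 a (\<lambda>a1 a2. G x1 x2 a1 a2 * c)) = D2 x (\<lambda>x1 x2. D2 a (\<lambda>a1 a2. G x1 x2 a1 a2)) * c"
  by (simp add: D2_def sum_list_mult_right split_def)

lemma claim5: "evD sc (actB \<Delta> \<sigma> S x a (thetaL \<Delta> \<sigma> (inv S) y)) = th (act (conv \<Delta> (lmap \<sigma> x) (rmap \<sigma> a)) y)"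
proof
  fix h
  show "evD sc (actB \<Delta> \<sigma> S x a (thetaL \<Delta> \<sigma> (inv S) y)) h = th (act (conv \<Delta> (lmap \<sigma> x) (rmap \<sigma> a)) y) h"
  proof (rule sepH)
    fix \<chi> assume c: "linK \<chi>"
    define \<phi> where "\<phi> = conv \<Delta> (lmap \<sigma> x) (rmap \<sigma> a)"
    have phil: "linK \<phi>" unfolding \<phi>_def by (rule conv_lin) (simp_all add: lmap_def rmap_def sig_lin1 sig_lin2)
    define C where "C x2 a1 = conv \<Delta> (lmap \<sigma> x2) (rmap \<sigma> a1)" for x2 a1
    have Cl: "linK (C x2 a1)" for x2 a1 unfolding C_def by (rule conv_lin) (simp_all add: lmap_def rmap_def sig_lin1 sig_lin2)
    note L = LI3 c phil lK_comp[OF phil] sig_lin1 sig_lin2 Cl lK_comp[OF Cl]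
    have "\<chi> (evD sc (actB \<Delta> \<sigma> S x a (thetaL \<Delta> \<sigma> (inv S) y)) h)
        = D2 x (\<lambda>x1 x2. D2 a (\<lambda>a1 a2. \<chi> (evD sc (multD \<Delta> Si (multD \<Delta> Si (iD (C x2 a1)) (thetaL \<Delta> \<sigma> (inv S) y)) (iD (\<lambda>w. C x1 a2 (Si w)))) h)))"
      unfolding actB_def chi_evD[OF c] sum_list_map_concat sum_product_D2[symmetric]
      by (simp add: C_def split_def comp_def)
    also have "\<dots> = D2 x (\<lambda>x1 x2. D2 a (\<lambda>a1 a2. D2 y (\<lambda>y1 y2. N3 y1 (\<lambda>p q r. N3 h (\<lambda>h1 h2 h3.
          C x2 a1 h1 * \<sigma> h2 (Si (Si y2)) * C x1 a2 (Si (Si r * h3 * p)) * \<chi> q)))))"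
    proof (intro D2_cong)
      fix x1 x2 a1 a2
      have "\<chi> (evD sc (multD \<Delta> Si (multD \<Delta> Si (iD (C x2 a1)) (thetaL \<Delta> \<sigma> (inv S) y)) (iD (\<lambda>w. C x1 a2 (Si w)))) h)
          = (\<Sum>(n,y')\<leftarrow>thetaL \<Delta> \<sigma> (inv S) y. N3 y' (\<lambda>p q r. N3 h (\<lambda>h1 h2 h3. C x2 a1 h1 * n h2 * C x1 a2 (Si (Si r * h3 * p)) * \<chi> q)))"
        apply (rule actB_item[OF c Cl])
         apply (intro L)
        apply (auto simp: thetaL_def lmap_def sig_lin1)
        done
      also have "\<dots> = D2 y (\<lambda>y1 y2. N3 y1 (\<lambda>p q r. N3 h (\<lambda>h1 h2 h3.
          C x2 a1 h1 * \<sigma> h2 (Si (Si y2)) * C x1 a2 (Si (Si r * h3 * p)) * \<chi> q)))"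
        by (simp add: thetaL_def lmap_def D2_def split_def comp_def)
      finally show "\<chi> (evD sc (multD \<Delta> Si (multD \<Delta> Si (iD (C x2 a1)) (thetaL \<Delta> \<sigma> (inv S) y)) (iD (\<lambda>w. C x1 a2 (Si w)))) h)
        = D2 y (\<lambda>y1 y2. N3 y1 (\<lambda>p q r. N3 h (\<lambda>h1 h2 h3.
          C x2 a1 h1 * \<sigma> h2 (Si (Si y2)) * C x1 a2 (Si (Si r * h3 * p)) * \<chi> q)))" .
    qed
    also have "\<dots> = D2 y (\<lambda>y1 y2. N3 y1 (\<lambda>p q r. N3 h (\<lambda>h1 h2 h3. D2 x (\<lambda>x1 x2. D2 a (\<lambda>a1 a2.
          C x2 a1 h1 * \<sigma> h2 (Si (Si y2)) * C x1 a2 (Si (Si r * h3 * p)) * \<chi> q)))))"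
      by (subst QD2, intro D2_cong, subst QN3, simp only: QN3)
    also have "\<dots> = D2 y (\<lambda>y1 y2. N3 y1 (\<lambda>p q r. N3 h (\<lambda>h1 h2 h3.
          \<phi> (Si (Si r * h3 * p) * h1) * (\<sigma> h2 (Si (Si y2)) * \<chi> q))))"
    proof -
      have "\<And>h1 h2 r h3 p y2 q. D2 x (\<lambda>x1 x2. D2 a (\<lambda>a1 a2.
          C x2 a1 h1 * \<sigma> h2 (Si (Si y2)) * C x1 a2 (Si (Si r * h3 * p)) * \<chi> q))
        = \<phi> (Si (Si r * h3 * p) * h1) * (\<sigma> h2 (Si (Si y2)) * \<chi> q)"
      proof -
        fix h1 h2 r h3 p y2 q
        have "D2 x (\<lambda>x1 x2. D2 a (\<lambda>a1 a2.
            C x2 a1 h1 * \<sigma> h2 (Si (Si y2)) * C x1 a2 (Si (Si r * h3 * p)) * \<chi> q))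
          = D2 x (\<lambda>x1 x2. D2 a (\<lambda>a1 a2. C x2 a1 h1 * C x1 a2 (Si (Si r * h3 * p)))) * (\<sigma> h2 (Si (Si y2)) * \<chi> q)"
          by (subst D2D2_mult_right[symmetric]) (simp add: mult_ac)
        also have "\<dots> = \<phi> (Si (Si r * h3 * p) * h1) * (\<sigma> h2 (Si (Si y2)) * \<chi> q)"
          unfolding C_def \<phi>_def Phi_id ..
        finally show "D2 x (\<lambda>x1 x2. D2 a (\<lambda>a1 a2.
            C x2 a1 h1 * \<sigma> h2 (Si (Si y2)) * C x1 a2 (Si (Si r * h3 * p)) * \<chi> q))
          = \<phi> (Si (Si r * h3 * p) * h1) * (\<sigma> h2 (Si (Si y2)) * \<chi> q)" .
      qed
      then show ?thesis by simp
    qed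
    also have "\<dots> = N4 y (\<lambda>p q r w. N3 h (\<lambda>h1 h2 h3. \<phi> (Si p * (Si h3 * Si (Si r) * h1)) * \<sigma> h2 (Si (Si w)) * \<chi> q))"
      by (simp add: N4_def Si_mult mult_ac)
    also have "\<dots> = N3 y (\<lambda>p q z. D2 z (\<lambda>r w. N3 h (\<lambda>h1 h2 h3. \<phi> (Si p * (Si h3 * Si (Si r) * h1)) * \<sigma> h2 (Si (Si w)) * \<chi> q)))"
      by (rule sp3_3[symmetric]) (intro L)
    also have "\<dots> = N3 y (\<lambda>p q z. D2 (Si (Si z)) (\<lambda>v1 v2. N3 h (\<lambda>h1 h2 h3. (\<phi> (Si p * (Si h3 * v1 * h1)) * \<chi> q) * \<sigma> h2 v2)))"
    proof -
      have "\<And>p q z. D2 (Si (Si z)) (\<lambda>v1 v2. N3 h (\<lambda>h1 h2 h3. (\<phi> (Si p * (Si h3 * v1 * h1)) * \<chi> q) * \<sigma> h2 v2))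
          = D2 z (\<lambda>r w. N3 h (\<lambda>h1 h2 h3. \<phi> (Si p * (Si h3 * Si (Si r) * h1)) * \<sigma> h2 (Si (Si w)) * \<chi> q))"
        by (subst D2_SiSi) (intro L, simp add: mult_ac)
      then show ?thesis by simp
    qed
    also have "\<dots> = N3 y (\<lambda>p q z. D2 (Si (Si z)) (\<lambda>v1 v2. \<sigma> h v1 * (\<phi> (Si p * v2) * \<chi> q)))"
    proof -
      have "\<And>p q z. D2 (Si (Si z)) (\<lambda>v1 v2. N3 h (\<lambda>h1 h2 h3. (\<phi> (Si p * (Si h3 * v1 * h1)) * \<chi> q) * \<sigma> h2 v2))
          = D2 (Si (Si z)) (\<lambda>v1 v2. \<sigma> h v1 * (\<phi> (Si p * v2) * \<chi> q))"
        by (rule cqt_id[of "\<lambda>t. \<phi> (Si p * t) * \<chi> q" for p q]) (intro L)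
      then show ?thesis by simp
    qed
    also have "\<dots> = N3 y (\<lambda>p q z. D2 z (\<lambda>r w. \<sigma> h (Si (Si r)) * (\<phi> (Si p * Si (Si w)) * \<chi> q)))"
    proof -
      have "\<And>p q z. D2 (Si (Si z)) (\<lambda>v1 v2. \<sigma> h v1 * (\<phi> (Si p * v2) * \<chi> q))
          = D2 z (\<lambda>r w. \<sigma> h (Si (Si r)) * (\<phi> (Si p * Si (Si w)) * \<chi> q))"
        by (rule D2_SiSi) (intro L)
      then show ?thesis by simp
    qed
    also have "\<dots> = N4 y (\<lambda>p q r w. \<sigma> h (Si (Si r)) * (\<phi> (Si p * Si (Si w)) * \<chi> q))"
      by (rule sp3_3) (intro L)
    also have "\<dots> = N4 y (\<lambda>a b1 b2 c. \<phi> (Si a * Si (Si c)) * (\<sigma> h (Si (Si b2)) * \<chi> b1))"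
      by (simp add: mult_ac)
    also have "\<dots> = N3 y (\<lambda>a b c. D2 b (\<lambda>b1 b2. \<phi> (Si a * Si (Si c)) * (\<sigma> h (Si (Si b2)) * \<chi> b1)))"
      by (rule sp3_2[symmetric]) (intro L)
    also have "\<dots> = N3 y (\<lambda>a b c. \<phi> (Si a * Si (Si c)) * \<chi> (th b h))"
      by (simp add: theta_psi[OF c] D2_def sum_list_mult_left split_def)
    also have "\<dots> = \<chi> (th (act \<phi> y) h)"
      by (rule act_psi[symmetric]) (rule theta_lin_fun[OF c])
    finally show "\<chi> (evD sc (actB \<Delta> \<sigma> S x a (thetaL \<Delta> \<sigma> (inv S) y)) h) = \<chi> (th (act (conv \<Delta> (lmap \<sigma> x) (rmap \<sigma> a)) y) h)"
      by (simp add: \<phi>_def)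
  qed
qed

end

context HC
begin

lemma main_result:
  "Bset sc \<Delta> \<epsilon> S \<sigma> X A = theta sc \<Delta> \<sigma> S ` X
     \<and> (\<forall>x\<in>X. \<forall>y\<in>X. theta sc \<Delta> \<sigma> S (x + y) = (\<lambda>h. theta sc \<Delta> \<sigma> S x h + theta sc \<Delta> \<sigma> S y h))
     \<and> (\<forall>c. \<forall>x\<in>X. theta sc \<Delta> \<sigma> S (sc c x) = (\<lambda>h. sc c (theta sc \<Delta> \<sigma> S x h)))
     \<and> inj_on (theta sc \<Delta> \<sigma> S) X
     \<and> (\<forall>x\<in>X. \<forall>a\<in>A. \<forall>y\<in>X.
          evD sc (actB \<Delta> \<sigma> S x a (thetaL \<Delta> \<sigma> (inv S) y))
        = theta sc \<Delta> \<sigma> S (actX sc \<Delta> S (conv \<Delta> (lmap \<sigma> x) (rmap \<sigma> a)) y))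
     \<and> (\<forall>y\<in>X. \<forall>h h'. coactB sc \<Delta> \<sigma> S (thetaL \<Delta> \<sigma> (inv S) y) h h'
          = (\<Sum>(y1,y2,y3)\<leftarrow>delta2 \<Delta> y. sc (\<sigma> h (inv S y1 * inv S (inv S y3))) (theta sc \<Delta> \<sigma> S y2 h')))
     \<and> left_YD sc \<Delta> \<epsilon> (HXA \<Delta> \<sigma> X A) X (actX sc \<Delta> S) (coactX sc \<Delta> \<sigma> S)"
  using Bset_eq theta_add theta_sc theta_inj claim5 claim6 YD by (auto intro!: ext)

end

theorem proposition3p2:
  fixes sc :: "'k::field \<Rightarrow> 'h::ring_1 \<Rightarrow> 'h"
    and \<Delta> :: "'h \<Rightarrow> ('h \<times> 'h) list" and \<epsilon> :: "'h \<Rightarrow> 'k" and S :: "'h \<Rightarrow> 'h"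
    and \<sigma> :: "'h \<Rightarrow> 'h \<Rightarrow> 'k" and X A :: "'h set"
  assumes hopf: "hopf_algebra sc \<Delta> \<epsilon> S"
    and Sbij: "bij S"
    and cqt: "cqt sc \<Delta> \<epsilon> \<sigma>"
    and subX: "sub_hopf sc \<Delta> S X"
    and subA: "sub_hopf sc \<Delta> S A"
  shows
    \<comment> \<open>(i)\<close>
    "Bset sc \<Delta> \<epsilon> S \<sigma> X A = theta sc \<Delta> \<sigma> S ` X
     \<and> (\<forall>x\<in>X. \<forall>y\<in>X. theta sc \<Delta> \<sigma> S (x + y) = (\<lambda>h. theta sc \<Delta> \<sigma> S x h + theta sc \<Delta> \<sigma> S y h))
     \<and> (\<forall>c. \<forall>x\<in>X. theta sc \<Delta> \<sigma> S (sc c x) = (\<lambda>h. sc c (theta sc \<Delta> \<sigma> S x h)))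
     \<and> inj_on (theta sc \<Delta> \<sigma> S) X
     \<comment> \<open>(ii): transported action and coaction, and the Yetter-Drinfeld property\<close>
     \<and> (\<forall>x\<in>X. \<forall>a\<in>A. \<forall>y\<in>X.
          evD sc (actB \<Delta> \<sigma> S x a (thetaL \<Delta> \<sigma> (inv S) y))
        = theta sc \<Delta> \<sigma> S (actX sc \<Delta> S (conv \<Delta> (lmap \<sigma> x) (rmap \<sigma> a)) y))
     \<and> (\<forall>y\<in>X. \<forall>h h'. coactB sc \<Delta> \<sigma> S (thetaL \<Delta> \<sigma> (inv S) y) h h'
          = (\<Sum>(y1,y2,y3)\<leftarrow>delta2 \<Delta> y. sc (\<sigma> h (inv S y1 * inv S (inv S y3))) (theta sc \<Delta> \<sigma> S y2 h')))
     \<and> left_YD sc \<Delta> \<epsilon> (HXA \<Delta> \<sigma> X A) X (actX sc \<Delta> S) (coactX sc \<Delta> \<sigma> S)"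
  proof -
  interpret HC sc \<Delta> \<epsilon> S \<sigma> X A
    by (unfold_locales) (fact hopf Sbij cqt subX subA)+
  show ?thesis by (rule main_result)
qed

end
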